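(* Let $\mathfrak g$ be a compact simple Lie algebra, $n=\dim\mathfrak g$, and $\phi=\phi^l$ a nonzero $\mathrm{Ad}(\mathfrak g)$-invariant $l$-form on $\mathfrak g$ with $3\le l\le n-3$. For $0\le k\le n$: (a) $\Lambda^k_{\phi_-}=*L_\phi(\Lambda^{n-l-k}\mathfrak g)=*L_\phi(\Lambda^{n-l-k}_{\phi_-})$; (b) $\Lambda^k_{\phi_-}\neq0$ if and only if $k\le n-l$; (c) $*L_\phi$ induces an isomorphism $\Lambda^{n-l-k}_{\phi_-}\to\Lambda^k_{\phi_-}$ (for $0\le k\le n-l$); in particular $\Lambda^0_{\phi_-}\cong\Lambda^{n-l}_{\phi_-}\cong\mathbb R$, $\Lambda^1_{\phi_-}\cong\Lambda^{n-l-1}_{\phi_-}\cong\Lambda^1\mathfrak g$, and $\Lambda^k_{\phi_-}=0$ for $n-l+1\le k\le n$. (d) $(-1)^{l+1}L_\phi d_{\mathfrak g}+d_{\mathfrak g}L_\phi=0=(-1)^{l+1}L_\phi\delta_{\mathfrak g}+\delta_{\mathfrak g}L_\phi$; consequently $L_\phi$ preserves the subspaces of $d_{\mathfrak g}$-harmonic, $d_{\mathfrak g}$-exact and $\delta_{\mathfrak g}$-exact elements of $\Lambda^*\mathfrak g$.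
   Context: Inner product $\langle,\rangle=-B$ ($B$ Killing form) on $\mathfrak g$, extended to $\Lambda^k\mathfrak g$, identifying $\mathfrak g\cong\mathfrak g^*$; $*$ the Hodge star for $\langle,\rangle$ and a fixed orientation. $L_\phi:\Lambda^k\mathfrak g\to\Lambda^{k+l}\mathfrak g$, $\gamma\mapsto\phi\wedge\gamma$. $\Lambda^k_{\phi_+}:=\{\beta\in\Lambda^k\mathfrak g:\phi\wedge\beta=0\}$ and $\Lambda^k_{\phi_-}$ its orthogonal complement in $\Lambda^k\mathfrak g$. $d_{\mathfrak g}$: on $\Lambda^1$, $\langle d_{\mathfrak g}v,x\wedge y\rangle=\langle v,[x,y]\rangle$, extended as a graded derivation of degree $+1$ ($d_{\mathfrak g}(\alpha\wedge\beta)=d_{\mathfrak g}\alpha\wedge\beta+(-1)^{\deg\alpha}\alpha\wedge d_{\mathfrak g}\beta$); $\delta_{\mathfrak g}$ its adjoint. Harmonic elements: $\ker d_{\mathfrak g}\cap\ker\delta_{\mathfrak g}$. *)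

theory Defs
  imports "HOL-Analysis.Analysis"
begin

text \<open>
The Lie algebra g is realised as real^'n with a basis e_i (i :: 'n) and structure
constants c, [e_i,e_j] = sum_k c i j k e_k.  The basis is assumed orthonormal for the inner
product -B (B the Killing form); every compact semisimple Lie algebra admits such a basis.
The exterior algebra Lambda^* g is real^('n set): the coordinate at I is the coefficient of
e_I = e_{i1} wedge ... wedge e_{ik} (i1 < ... < ik).  The orientation is the one of
e_{i1} wedge ... wedge e_{in} in the order of 'n.
\<close>

type_synonym 'n form = "real ^ ('n set)"

definition bracket :: "('n \<Rightarrow> 'n \<Rightarrow> 'n \<Rightarrow> real) \<Rightarrow> real^'n \<Rightarrow> real^'n \<Rightarrow> real^'n" where
  "bracket c x y = (\<chi> k. \<Sum>i\<in>UNIV. \<Sum>j\<in>UNIV. x $ i * y $ j * c i j k)"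

definition is_lie_algebra :: "('n::finite \<Rightarrow> 'n \<Rightarrow> 'n \<Rightarrow> real) \<Rightarrow> bool" where
  "is_lie_algebra c \<longleftrightarrow>
     (\<forall>i j k. c i j k = - c j i k) \<and>
     (\<forall>i j k p. (\<Sum>m\<in>UNIV. c i j m * c m k p + c j k m * c m i p + c k i m * c m j p) = 0)"

text \<open>Killing form on basis vectors: B(e_i,e_j) = tr(ad e_i o ad e_j).\<close>
definition killing :: "('n::finite \<Rightarrow> 'n \<Rightarrow> 'n \<Rightarrow> real) \<Rightarrow> 'n \<Rightarrow> 'n \<Rightarrow> real" where
  "killing c i j = (\<Sum>p\<in>UNIV. \<Sum>q\<in>UNIV. c i q p * c j p q)"

definition lie_ideal :: "('n::finite \<Rightarrow> 'n \<Rightarrow> 'n \<Rightarrow> real) \<Rightarrow> (real^'n) set \<Rightarrow> bool" where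
  "lie_ideal c S \<longleftrightarrow> subspace S \<and> (\<forall>x\<in>S. \<forall>y. bracket c x y \<in> S)"

definition compact_simple_orthonormal :: "('n::finite \<Rightarrow> 'n \<Rightarrow> 'n \<Rightarrow> real) \<Rightarrow> bool" where
  "compact_simple_orthonormal c \<longleftrightarrow>
     is_lie_algebra c \<and>
     (\<forall>i j. killing c i j = - (if i = j then 1 else 0)) \<and>
     (\<exists>x y. bracket c x y \<noteq> 0) \<and>
     (\<forall>S. lie_ideal c S \<longrightarrow> S = {0} \<or> S = UNIV)"

text \<open>Sign of the shuffle: e_I wedge e_J = shuffle_sign I J * e_(I union J) for disjoint I, J.\<close>
definition shuffle_sign :: "'n::linorder set \<Rightarrow> 'n set \<Rightarrow> real" where
  "shuffle_sign I J = (-1) ^ card {(i, j). i \<in> I \<and> j \<in> J \<and> j < i}"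

definition basis_form :: "'n::finite set \<Rightarrow> 'n form" where
  "basis_form I = (\<chi> K. if K = I then 1 else 0)"

definition Lam :: "int \<Rightarrow> ('n::finite) form set" where
  "Lam k = {\<omega>. \<forall>I. int (card I) \<noteq> k \<longrightarrow> \<omega> $ I = 0}"

definition wedge :: "('n::{finite,linorder}) form \<Rightarrow> 'n form \<Rightarrow> 'n form" (infixr "\<and>\<^sub>w" 70) where
  "wedge \<alpha> \<beta> = (\<chi> K. \<Sum>I\<in>Pow K. shuffle_sign I (K - I) * \<alpha> $ I * \<beta> $ (K - I))"

text \<open>Inner product extended from -B (basis e_I orthonormal).\<close>
definition form_inner :: "('n::finite) form \<Rightarrow> 'n form \<Rightarrow> real" where
  "form_inner \<alpha> \<beta> = (\<Sum>I\<in>UNIV. \<alpha> $ I * \<beta> $ I)"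

text \<open>Hodge star: alpha wedge *beta = <alpha,beta> vol, vol = e_UNIV.\<close>
definition hodge :: "('n::{finite,linorder}) form \<Rightarrow> 'n form" where
  "hodge \<alpha> = (\<chi> K. shuffle_sign (- K) K * \<alpha> $ (- K))"

definition L_op :: "('n::{finite,linorder}) form \<Rightarrow> 'n form \<Rightarrow> 'n form" where
  "L_op \<phi> \<gamma> = \<phi> \<and>\<^sub>w \<gamma>"

definition Lam_plus :: "('n::{finite,linorder}) form \<Rightarrow> int \<Rightarrow> 'n form set" where
  "Lam_plus \<phi> k = {\<beta> \<in> Lam k. \<phi> \<and>\<^sub>w \<beta> = 0}"

definition Lam_minus :: "('n::{finite,linorder}) form \<Rightarrow> int \<Rightarrow> 'n form set" where
  "Lam_minus \<phi> k = {\<beta> \<in> Lam k. \<forall>\<gamma>\<in>Lam_plus \<phi> k. form_inner \<beta> \<gamma> = 0}"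

text \<open>d on Lambda^1: the unique element with <d v, x wedge y> = <v,[x,y]>, namely
  d e_k = sum_{i<j} <e_k,[e_i,e_j]> e_i wedge e_j.\<close>
definition d1 :: "('n::{finite,linorder} \<Rightarrow> 'n \<Rightarrow> 'n \<Rightarrow> real) \<Rightarrow> 'n \<Rightarrow> 'n form" where
  "d1 c k = (\<chi> K. if card K = 2 then c (Min K) (Max K) k else 0)"

fun wedge_list :: "('n::{finite,linorder}) list \<Rightarrow> 'n form" where
  "wedge_list [] = basis_form {}"
| "wedge_list (j # js) = basis_form {j} \<and>\<^sub>w wedge_list js"

fun d_list :: "('n::{finite,linorder} \<Rightarrow> 'n \<Rightarrow> 'n \<Rightarrow> real) \<Rightarrow> 'n list \<Rightarrow> 'n form" where
  "d_list c [] = 0"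
| "d_list c (j # js) = d1 c j \<and>\<^sub>w wedge_list js - basis_form {j} \<and>\<^sub>w d_list c js"

definition d_g :: "('n::{finite,linorder} \<Rightarrow> 'n \<Rightarrow> 'n \<Rightarrow> real) \<Rightarrow> 'n form \<Rightarrow> 'n form" where
  "d_g c \<omega> = (\<Sum>J\<in>UNIV. \<omega> $ J *\<^sub>R d_list c (sorted_list_of_set J))"

text \<open>delta: the adjoint of d_g w.r.t. form_inner.\<close>
definition delta_g :: "('n::{finite,linorder} \<Rightarrow> 'n \<Rightarrow> 'n \<Rightarrow> real) \<Rightarrow> 'n form \<Rightarrow> 'n form" where
  "delta_g c \<omega> = (\<chi> I. form_inner (d_g c (basis_form I)) \<omega>)"

definition harmonic :: "('n::{finite,linorder} \<Rightarrow> 'n \<Rightarrow> 'n \<Rightarrow> real) \<Rightarrow> 'n form \<Rightarrow> bool" where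
  "harmonic c \<omega> \<longleftrightarrow> d_g c \<omega> = 0 \<and> delta_g c \<omega> = 0"

text \<open>Interior product with e_j (e_j is dual to itself under the orthonormal identification).\<close>
definition interior :: "('n::{finite,linorder}) \<Rightarrow> 'n form \<Rightarrow> 'n form" where
  "interior j \<omega> = (\<chi> K. if j \<in> K then 0 else shuffle_sign {j} K * \<omega> $ (insert j K))"

text \<open>Derivation extension of ad x to Lambda^* g:
  sum_{i,j} <e_i,[x,e_j]> e_i wedge interior e_j.\<close>
definition ad_action :: "('n::{finite,linorder} \<Rightarrow> 'n \<Rightarrow> 'n \<Rightarrow> real) \<Rightarrow> (real, 'n) vec \<Rightarrow> 'n form \<Rightarrow> 'n form" where
  "ad_action c x \<omega> = (\<Sum>i\<in>UNIV. \<Sum>j\<in>UNIV.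
      (bracket c x (axis j 1) $ i) *\<^sub>R (basis_form {i} \<and>\<^sub>w interior j \<omega>))"

definition ad_invariant :: "('n::{finite,linorder} \<Rightarrow> 'n \<Rightarrow> 'n \<Rightarrow> real) \<Rightarrow> 'n form \<Rightarrow> bool" where
  "ad_invariant c \<phi> \<longleftrightarrow> (\<forall>x. ad_action c x \<phi> = 0)"

end

theory Submission
  imports Defs
begin


abbreviation bf :: "'n::finite set \<Rightarrow> 'n form" where "bf \<equiv> basis_form"

definition ninv :: "'n::linorder set \<Rightarrow> 'n set \<Rightarrow> nat" where
  "ninv A B = card {(i, j). i \<in> A \<and> j \<in> B \<and> j < i}"

lemma ss_ninv: "shuffle_sign A B = (-1) ^ ninv A B"
  by (simp add: shuffle_sign_def ninv_def)

lemma ninv_Un_left: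
  fixes A B C :: "'n::{finite,linorder} set"
  assumes "A \<inter> B = {}"
  shows "ninv (A \<union> B) C = ninv A C + ninv B C"
proof -
  have "{(i,j). i \<in> A \<union> B \<and> j \<in> C \<and> j < i} = {(i,j). i \<in> A \<and> j \<in> C \<and> j < i} \<union> {(i,j). i \<in> B \<and> j \<in> C \<and> j < i}" by auto
  moreover have "{(i,j). i \<in> A \<and> j \<in> C \<and> j < i} \<inter> {(i,j). i \<in> B \<and> j \<in> C \<and> j < i} = {}" using assms by auto
  ultimately show ?thesis unfolding ninv_def by (simp add: card_Un_disjoint)
qed

lemma ninv_Un_right:
  fixes A B C :: "'n::{finite,linorder} set"
  assumes "B \<inter> C = {}"
  shows "ninv A (B \<union> C) = ninv A B + ninv A C"
proof -
  have "{(i,j). i \<in> A \<and> j \<in> B \<union> C \<and> j < i} = {(i,j). i \<in> A \<and> j \<in> B \<and> j < i} \<union> {(i,j). i \<in> A \<and> j \<in> C \<and> j < i}" by auto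
  moreover have "{(i,j). i \<in> A \<and> j \<in> B \<and> j < i} \<inter> {(i,j). i \<in> A \<and> j \<in> C \<and> j < i} = {}" using assms by auto
  ultimately show ?thesis unfolding ninv_def by (simp add: card_Un_disjoint)
qed

lemma ninv_swap:
  fixes A B :: "'n::{finite,linorder} set"
  assumes "A \<inter> B = {}"
  shows "ninv A B + ninv B A = card A * card B"
proof -
  have e1: "A \<times> B = {(i,j). i \<in> A \<and> j \<in> B \<and> j < i} \<union> {(i,j). i \<in> A \<and> j \<in> B \<and> i < j}"
    using assms by (auto simp: neq_iff)
  have e2: "{(i,j). i \<in> A \<and> j \<in> B \<and> j < i} \<inter> {(i,j). i \<in> A \<and> j \<in> B \<and> i < j} = {}" by auto
  have e3: "{(i,j). i \<in> A \<and> j \<in> B \<and> i < j} = prod.swap ` {(i,j). i \<in> B \<and> j \<in> A \<and> j < i}"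
    by (auto simp: image_iff)
  have "card {(i,j). i \<in> A \<and> j \<in> B \<and> i < j} = ninv B A"
    unfolding e3 ninv_def by (rule card_image) (simp add: inj_on_def)
  moreover have "card (A \<times> B) = card A * card B" by (simp add: card_cartesian_product)
  ultimately show ?thesis unfolding ninv_def using e1 e2 by (simp add: card_Un_disjoint)
qed

lemma neg1_sq[simp]: "(-1::real) ^ m * (-1) ^ m = 1"
  by (simp flip: power_add)

lemma ss_sq[simp]: "shuffle_sign A B * shuffle_sign A B = 1"
  by (simp add: ss_ninv)

lemma ss_Un_left: "A \<inter> B = {} \<Longrightarrow> shuffle_sign (A \<union> B) (C::'n::{finite,linorder} set) = shuffle_sign A C * shuffle_sign B C"
  by (simp add: ss_ninv ninv_Un_left power_add)

lemma ss_Un_right: "B \<inter> C = {} \<Longrightarrow> shuffle_sign (A::'n::{finite,linorder} set) (B \<union> C) = shuffle_sign A B * shuffle_sign A C"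
  by (simp add: ss_ninv ninv_Un_right power_add)

lemma ss_swap: "A \<inter> B = {} \<Longrightarrow> shuffle_sign (A::'n::{finite,linorder} set) B * shuffle_sign B A = (-1) ^ (card A * card B)"
  by (simp add: ss_ninv ninv_swap flip: power_add)

lemma ss_swap': "A \<inter> B = {} \<Longrightarrow> shuffle_sign (A::'n::{finite,linorder} set) B = (-1) ^ (card A * card B) * shuffle_sign B A"
proof -
  assume "A \<inter> B = {}"
  hence "shuffle_sign A B * shuffle_sign B A * shuffle_sign B A = (-1) ^ (card A * card B) * shuffle_sign B A"
    using ss_swap by metis
  thus ?thesis by (simp add: mult.assoc)
qed

lemma ss_empty_left[simp]: "shuffle_sign {} B = 1" by (simp add: shuffle_sign_def)
lemma ss_empty_right[simp]: "shuffle_sign A {} = 1" by (simp add: shuffle_sign_def)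
lemma ss_nz[simp]: "shuffle_sign A B \<noteq> 0" by (simp add: shuffle_sign_def)

lemma ss_min: "\<forall>x\<in>I. m < x \<Longrightarrow> shuffle_sign {m} I = 1"
proof -
  assume a: "\<forall>x\<in>I. m < x"
  have "{(i, j). i \<in> {m} \<and> j \<in> I \<and> j < i} = {}" using a by auto
  thus ?thesis by (simp only: shuffle_sign_def card.empty power_0)
qed

lemma ss_single_swap: "(i::'n::{finite,linorder}) \<noteq> j \<Longrightarrow> shuffle_sign {i} {j} * shuffle_sign {j} {i} = -1"
  using ss_swap[of "{i}" "{j}"] by simp

subsection \<open>Basis forms and wedge\<close>

lemma bf_nth: "bf I $ K = (if K = I then 1 else 0)"
  by (simp add: basis_form_def)

lemma form_expand: "(x::'n::finite form) = (\<Sum>I\<in>UNIV. x $ I *\<^sub>R bf I)"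
  by (simp add: vec_eq_iff bf_nth sum_component if_distrib cong: if_cong)

lemma form_inner_eq: "form_inner x y = x \<bullet> y"
  by (simp add: form_inner_def inner_vec_def)

lemma inner_bf_right: "x \<bullet> bf I = x $ I"
  by (simp add: inner_vec_def bf_nth if_distrib cong: if_cong)

lemma inner_bf_left: "bf I \<bullet> x = x $ I"
  by (simp add: inner_commute inner_bf_right)

lemma form_eq_coords: "(\<And>I. (x::'n::finite form) $ I = y $ I) \<Longrightarrow> x = y"
  by (simp add: vec_eq_iff)

lemma linear_eq_bf_supp:
  fixes f g :: "'n::finite form \<Rightarrow> 'b::real_vector"
  assumes "linear f" "linear g" "\<And>I. x $ I \<noteq> 0 \<Longrightarrow> f (bf I) = g (bf I)"
  shows "f x = g x"
proof -
  have "f x = (\<Sum>I\<in>UNIV. x $ I *\<^sub>R f (bf I))"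
    by (subst form_expand) (simp add: linear_sum[OF assms(1)] linear_scale[OF assms(1)])
  also have "\<dots> = (\<Sum>I\<in>UNIV. x $ I *\<^sub>R g (bf I))"
    by (rule sum.cong) (auto simp: assms(3))
  also have "\<dots> = g x"
    by (subst (2) form_expand) (simp add: linear_sum[OF assms(2)] linear_scale[OF assms(2)])
  finally show ?thesis .
qed

lemma linear_eq_bf:
  fixes f g :: "'n::finite form \<Rightarrow> 'b::real_vector"
  assumes "linear f" "linear g" "\<And>I. f (bf I) = g (bf I)"
  shows "f x = g x"
  using linear_eq_bf_supp[OF assms(1,2)] assms(3) by blast

lemma wedge_nth: "(a \<and>\<^sub>w b) $ K = (\<Sum>I\<in>Pow K. shuffle_sign I (K - I) * a $ I * b $ (K - I))"
  by (simp add: wedge_def)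

lemma wedge_add_left: "(a + b) \<and>\<^sub>w c = a \<and>\<^sub>w c + b \<and>\<^sub>w c"
  by (simp add: vec_eq_iff wedge_nth algebra_simps sum.distrib)
lemma wedge_add_right: "c \<and>\<^sub>w (a + b) = c \<and>\<^sub>w a + c \<and>\<^sub>w b"
  by (simp add: vec_eq_iff wedge_nth algebra_simps sum.distrib)
lemma wedge_scale_left: "(r *\<^sub>R a) \<and>\<^sub>w c = r *\<^sub>R (a \<and>\<^sub>w c)"
  by (simp add: vec_eq_iff wedge_nth algebra_simps sum_distrib_left)
lemma wedge_scale_right: "c \<and>\<^sub>w (r *\<^sub>R a) = r *\<^sub>R (c \<and>\<^sub>w a)"
  by (simp add: vec_eq_iff wedge_nth algebra_simps sum_distrib_left)

lemma linear_wedge_left: "linear (\<lambda>a. a \<and>\<^sub>w c)"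
  by (intro linearI) (simp_all add: wedge_add_left wedge_scale_left)
lemma linear_wedge_right: "linear (\<lambda>a. c \<and>\<^sub>w a)"
  by (intro linearI) (simp_all add: wedge_add_right wedge_scale_right)

lemma wedge_zero_left[simp]: "0 \<and>\<^sub>w c = 0" by (simp add: vec_eq_iff wedge_nth)
lemma wedge_zero_right[simp]: "c \<and>\<^sub>w 0 = 0" by (simp add: vec_eq_iff wedge_nth)
lemma wedge_diff_left: "(a - b) \<and>\<^sub>w c = a \<and>\<^sub>w c - b \<and>\<^sub>w c"
  by (simp add: vec_eq_iff wedge_nth algebra_simps sum_subtractf)
lemma wedge_diff_right: "c \<and>\<^sub>w (a - b) = c \<and>\<^sub>w a - c \<and>\<^sub>w b"
  by (simp add: vec_eq_iff wedge_nth algebra_simps sum_subtractf)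
lemma wedge_neg_left: "(- a) \<and>\<^sub>w c = - (a \<and>\<^sub>w c)"
  by (simp add: vec_eq_iff wedge_nth algebra_simps sum_negf)
lemma wedge_neg_right: "c \<and>\<^sub>w (- a) = - (c \<and>\<^sub>w a)"
  by (simp add: vec_eq_iff wedge_nth algebra_simps sum_negf)
lemma wedge_sum_left: "(sum f S) \<and>\<^sub>w c = (\<Sum>x\<in>S. f x \<and>\<^sub>w c)" using linear_sum[OF linear_wedge_left] by simp
lemma wedge_sum_right: "c \<and>\<^sub>w (sum f S) = (\<Sum>x\<in>S. c \<and>\<^sub>w f x)" using linear_sum[OF linear_wedge_right] by simp

lemmas wedge_lin = wedge_add_left wedge_add_right wedge_scale_left wedge_scale_right
  wedge_diff_left wedge_diff_right wedge_neg_left wedge_neg_right wedge_sum_left wedge_sum_right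

lemma wedge_bf_right: "(a \<and>\<^sub>w bf J) $ K = (if J \<subseteq> K then shuffle_sign (K - J) J * a $ (K - J) else 0)"
proof -
  have "\<And>I. I \<in> Pow K \<Longrightarrow> shuffle_sign I (K - I) * a $ I * bf J $ (K - I)
     = (if I = K - J then (if J \<subseteq> K then shuffle_sign (K - J) J * a $ (K - J) else 0) else 0)"
    by (auto simp: bf_nth Diff_Diff_Int Int_absorb1)
  hence "(a \<and>\<^sub>w bf J) $ K = (\<Sum>I\<in>Pow K. (if I = K - J then (if J \<subseteq> K then shuffle_sign (K - J) J * a $ (K - J) else 0) else 0))"
    unfolding wedge_nth by (rule sum.cong[OF refl])
  thus ?thesis by (simp add: sum.delta)
qed

lemma wedge_bf_left: "(bf J \<and>\<^sub>w a) $ K = (if J \<subseteq> K then shuffle_sign J (K - J) * a $ (K - J) else 0)"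
proof -
  have "\<And>I. I \<in> Pow K \<Longrightarrow> shuffle_sign I (K - I) * bf J $ I * a $ (K - I)
     = (if I = J then (if J \<subseteq> K then shuffle_sign J (K - J) * a $ (K - J) else 0) else 0)"
    by (auto simp: bf_nth)
  hence "(bf J \<and>\<^sub>w a) $ K = (\<Sum>I\<in>Pow K. (if I = J then (if J \<subseteq> K then shuffle_sign J (K - J) * a $ (K - J) else 0) else 0))"
    unfolding wedge_nth by (rule sum.cong[OF refl])
  thus ?thesis by (simp add: sum.delta')
qed

lemma wedge_bf: "bf I \<and>\<^sub>w bf J = (if I \<inter> J = {} then shuffle_sign I J *\<^sub>R bf (I \<union> J) else 0)"
proof (rule form_eq_coords)
  fix K
  show "(bf I \<and>\<^sub>w bf J) $ K = (if I \<inter> J = {} then shuffle_sign I J *\<^sub>R bf (I \<union> J) else 0) $ K"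
    unfolding wedge_bf_left by (auto simp: bf_nth)
qed

lemma wedge_unit_left[simp]: "bf {} \<and>\<^sub>w a = a"
  by (rule form_eq_coords) (simp add: wedge_bf_left)
lemma wedge_unit_right[simp]: "a \<and>\<^sub>w bf {} = a"
  by (rule form_eq_coords) (simp add: wedge_bf_right)

lemma linear_eq_bf_fun:
  fixes f g :: "'n::finite form \<Rightarrow> 'b::real_vector"
  assumes "linear f" "linear g" "\<And>I. f (bf I) = g (bf I)"
  shows "f = g"
  using linear_eq_bf[OF assms] by blast

lemma card_compl: "card (- (K::'n::finite set)) = CARD('n) - card K"
  by (simp add: Compl_eq_Diff_UNIV card_Diff_subset)

subsection \<open>Associativity and graded commutativity\<close>

lemma wedge_assoc_bf: "(bf I \<and>\<^sub>w bf J) \<and>\<^sub>w bf K = bf I \<and>\<^sub>w (bf J \<and>\<^sub>w bf K)"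
proof (cases "I \<inter> J = {} \<and> I \<inter> K = {} \<and> J \<inter> K = {}")
  case True
  then show ?thesis
    by (simp add: wedge_bf wedge_scale_left wedge_scale_right Int_Un_distrib Int_Un_distrib2
        ss_Un_left ss_Un_right Un_assoc mult_ac)
next
  case False
  then show ?thesis
    by (auto simp: wedge_bf wedge_scale_left wedge_scale_right Int_Un_distrib Int_Un_distrib2)
qed

lemma wedge_assoc: "(a \<and>\<^sub>w b) \<and>\<^sub>w c = a \<and>\<^sub>w (b \<and>\<^sub>w c)"
proof -
  have h1: "\<And>I J. (\<lambda>c. (bf I \<and>\<^sub>w bf J) \<and>\<^sub>w c) = (\<lambda>c. bf I \<and>\<^sub>w (bf J \<and>\<^sub>w c))"
    by (rule linear_eq_bf_fun) (auto intro!: linearI simp: wedge_lin wedge_assoc_bf)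
  have h2: "\<And>I. (\<lambda>b. (bf I \<and>\<^sub>w b) \<and>\<^sub>w c) = (\<lambda>b. bf I \<and>\<^sub>w (b \<and>\<^sub>w c))"
    by (rule linear_eq_bf_fun) (auto intro!: linearI simp: wedge_lin h1[THEN fun_cong])
  have h3: "(\<lambda>a. (a \<and>\<^sub>w b) \<and>\<^sub>w c) = (\<lambda>a. a \<and>\<^sub>w (b \<and>\<^sub>w c))"
    by (rule linear_eq_bf_fun) (auto intro!: linearI simp: wedge_lin h2[THEN fun_cong])
  show ?thesis using h3 by (simp add: fun_eq_iff)
qed

lemma Lam_supp: "a \<in> Lam k \<Longrightarrow> a $ I \<noteq> 0 \<Longrightarrow> int (card I) = k"
  by (auto simp: Lam_def)

lemma Lam_supp_nat: "a \<in> Lam (int p) \<Longrightarrow> a $ I \<noteq> 0 \<Longrightarrow> card I = p"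
  by (auto simp: Lam_def)

lemma bf_Lam: "bf I \<in> Lam (int (card I))"
  by (simp add: Lam_def bf_nth)

lemma subspace_Lam: "subspace (Lam k)"
  by (auto simp: subspace_def Lam_def)

lemma Lam_0I: "(0::'n::finite form) \<in> Lam k" by (simp add: Lam_def)

lemma Lam_neg: "k < 0 \<Longrightarrow> Lam k = ({0} :: 'n::finite form set)"
  by (auto simp: Lam_def vec_eq_iff)

lemma Lam_big: "k > int CARD('n) \<Longrightarrow> Lam k = ({0} :: 'n::finite form set)"
proof -
  assume k: "k > int CARD('n)"
  have "\<And>I::'n set. int (card I) \<noteq> k"
    using k card_mono[of "UNIV::'n set"] by (metis card_seteq finite_class.finite_UNIV linorder_not_le of_nat_le_iff subset_UNIV)
  thus ?thesis by (auto simp: Lam_def vec_eq_iff)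
qed

lemma wedge_Lam: "a \<in> Lam p \<Longrightarrow> b \<in> Lam q \<Longrightarrow> a \<and>\<^sub>w b \<in> Lam (p + q)"
proof -
  assume a: "a \<in> Lam p" and b: "b \<in> Lam q"
  show ?thesis unfolding Lam_def
  proof (intro CollectI allI impI)
    fix K :: "'a set" assume K: "int (card K) \<noteq> p + q"
    have z: "\<And>I. I \<in> Pow K \<Longrightarrow> shuffle_sign I (K - I) * a $ I * b $ (K - I) = 0"
    proof -
      fix I assume I: "I \<in> Pow K"
      show "shuffle_sign I (K - I) * a $ I * b $ (K - I) = 0"
      proof (rule ccontr)
        assume "shuffle_sign I (K - I) * a $ I * b $ (K - I) \<noteq> 0"
        hence "a $ I \<noteq> 0" "b $ (K - I) \<noteq> 0" by auto
        hence "int (card I) = p" "int (card (K - I)) = q" using a b Lam_supp by blast+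
        moreover have "card K = card I + card (K - I)" using I
          by (simp add: card_Diff_subset card_mono)
        ultimately show False using K by simp
      qed
    qed
    show "(a \<and>\<^sub>w b) $ K = 0" unfolding wedge_nth using z by (intro sum.neutral) blast
  qed
qed

lemma wedge_comm_bf: "bf I \<and>\<^sub>w bf J = (-1) ^ (card I * card J) *\<^sub>R (bf J \<and>\<^sub>w bf I)"
proof (cases "I \<inter> J = {}")
  case True
  then show ?thesis using ss_swap'[OF True]
    by (simp add: wedge_bf Int_commute Un_commute)
next
  case False
  then show ?thesis by (simp add: wedge_bf Int_commute)
qed

lemma wedge_comm:
  assumes a: "a \<in> Lam (int p)" and b: "b \<in> Lam (int q)"
  shows "a \<and>\<^sub>w b = (-1) ^ (p * q) *\<^sub>R (b \<and>\<^sub>w a)"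
proof -
  have h1: "\<And>I. card I = p \<Longrightarrow> bf I \<and>\<^sub>w b = (-1) ^ (p * q) *\<^sub>R (b \<and>\<^sub>w bf I)"
  proof -
    fix I :: "'a set" assume I: "card I = p"
    show "bf I \<and>\<^sub>w b = (-1) ^ (p * q) *\<^sub>R (b \<and>\<^sub>w bf I)"
      by (rule linear_eq_bf_supp[where f="\<lambda>b. bf I \<and>\<^sub>w b" and g="\<lambda>b. (-1) ^ (p * q) *\<^sub>R (b \<and>\<^sub>w bf I)"])
        (auto intro!: linearI simp: wedge_lin algebra_simps wedge_comm_bf[of I] I Lam_supp_nat[OF b])
  qed
  show ?thesis
    by (rule linear_eq_bf_supp[where f="\<lambda>a. a \<and>\<^sub>w b" and g="\<lambda>a. (-1) ^ (p * q) *\<^sub>R (b \<and>\<^sub>w a)"])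
      (auto intro!: linearI simp: wedge_lin algebra_simps h1 Lam_supp_nat[OF a])
qed

subsection \<open>Hodge star\<close>

lemma hodge_nth: "hodge a $ K = shuffle_sign (- K) K * a $ (- K)"
  by (simp add: hodge_def)

lemma linear_hodge: "linear hodge"
  by (intro linearI) (simp_all add: vec_eq_iff hodge_nth algebra_simps)

lemma hodge_Lam: "a \<in> Lam p \<Longrightarrow> hodge (a::'n::{finite,linorder} form) \<in> Lam (int CARD('n) - p)"
proof -
  assume a: "a \<in> Lam p"
  show ?thesis unfolding Lam_def
  proof (intro CollectI allI impI)
    fix K :: "'n set" assume K: "int (card K) \<noteq> int CARD('n) - p"
    have "card K \<le> CARD('n)" by (simp add: card_mono)
    hence "int (card (- K)) \<noteq> p" using K by (simp add: card_compl of_nat_diff)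
    hence "a $ (- K) = 0" using a Lam_supp by blast
    thus "hodge a $ K = 0" by (simp add: hodge_nth)
  qed
qed

lemma hodge_hodge:
  assumes a: "a \<in> Lam (int p)"
  shows "hodge (hodge (a::'n::{finite,linorder} form)) = (-1) ^ (p * (CARD('n) - p)) *\<^sub>R a"
proof (rule form_eq_coords)
  fix K :: "'n set"
  show "hodge (hodge a) $ K = ((-1) ^ (p * (CARD('n) - p)) *\<^sub>R a) $ K"
  proof (cases "a $ K = 0")
    case True then show ?thesis by (simp add: hodge_nth)
  next
    case False
    hence "card K = p" using a Lam_supp_nat by blast
    moreover have "shuffle_sign (- K) K * shuffle_sign K (- K) = (-1) ^ (card K * card (- K))"
      by (subst mult.commute) (rule ss_swap, simp)
    ultimately show ?thesis by (simp add: hodge_nth card_compl mult.assoc)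
  qed
qed

lemma hodge_zero: "hodge a = 0 \<Longrightarrow> a = 0"
proof -
  assume h: "hodge a = 0"
  show "a = 0"
  proof (rule form_eq_coords)
    fix K
    have "hodge a $ (- K) = 0" using h by simp
    thus "a $ K = 0 $ K" by (simp add: hodge_nth)
  qed
qed

subsection \<open>Interior product\<close>

lemma interior_nth: "interior j a $ K = (if j \<in> K then 0 else shuffle_sign {j} K * a $ (insert j K))"
  by (simp add: interior_def)

lemma linear_interior: "linear (interior j)"
  by (intro linearI) (simp_all add: vec_eq_iff interior_nth algebra_simps)

lemma interior_zero[simp]: "interior j 0 = 0"
  by (simp add: vec_eq_iff interior_nth)

lemma interior_bf: "interior j (bf M) = (if j \<in> M then shuffle_sign {j} (M - {j}) *\<^sub>R bf (M - {j}) else 0)"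
proof (rule form_eq_coords)
  fix K
  show "interior j (bf M) $ K = (if j \<in> M then shuffle_sign {j} (M - {j}) *\<^sub>R bf (M - {j}) else 0) $ K"
    by (auto simp: interior_nth bf_nth)
qed

lemma interior_Lam: "(a::'n::{finite,linorder} form) \<in> Lam p \<Longrightarrow> interior j a \<in> Lam (p - 1)"
proof -
  assume a: "a \<in> Lam p"
  show ?thesis unfolding Lam_def
  proof (intro CollectI allI impI)
    fix K :: "'n set" assume K: "int (card K) \<noteq> p - 1"
    show "interior j a $ K = 0"
    proof (cases "j \<in> K")
      case False
      hence "int (card (insert j K)) \<noteq> p" using K by simp
      hence "a $ (insert j K) = 0" using a Lam_supp by blast
      thus ?thesis by (simp add: interior_nth)
    qed (simp add: interior_nth)
  qed
qed

lemma interior_empty[simp]: "interior j (bf {}) = 0"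
  by (simp add: interior_bf)

lemma interior_single: "interior j (bf {i}) = (if i = j then bf {} else 0)"
  by (simp add: interior_bf)

lemma interior_gen_bf: "interior j (bf {i} \<and>\<^sub>w bf K) = (if i = j then bf K else 0) - bf {i} \<and>\<^sub>w interior j (bf K)"
proof (cases "i = j")
  case True
  show ?thesis
  proof (cases "j \<in> K")
    case jK: True
    have e: "{j} \<union> (K - {j}) = K" using jK by auto
    show ?thesis using True jK
      by (simp add: wedge_bf interior_bf wedge_scale_right insert_absorb linear_0[OF linear_interior])
  next
    case jK: False
    have e: "insert j K - {j} = K" using jK by auto
    show ?thesis using True jK
      by (simp add: wedge_bf interior_bf linear_scale[OF linear_interior] e)
  qed
next
  case False
  show ?thesis
  proof (cases "j \<in> K \<and> i \<notin> K")
    case True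
    define M where "M = K - {j}"
    have K: "K = M \<union> {j}" "j \<notin> M" "i \<notin> M" using True by (auto simp: M_def)
    have e1: "insert i K - {j} = {i} \<union> M" using K \<open>i \<noteq> j\<close> by auto
    have s1: "shuffle_sign {i} K = shuffle_sign {i} M * shuffle_sign {i} {j}"
      using ss_Un_right[of M "{j}" "{i}"] K by simp
    have s2: "shuffle_sign {j} (insert i K - {j}) = shuffle_sign {j} M * shuffle_sign {j} {i}"
      unfolding e1 using ss_Un_right[of M "{i}" "{j}"] K by simp
    have s3: "shuffle_sign {i} K * shuffle_sign {j} (insert i K - {j}) = - (shuffle_sign {j} M * shuffle_sign {i} M)"
      unfolding s1 s2 using ss_single_swap[OF \<open>i \<noteq> j\<close>]
      by (metis (no_types, lifting) mult.commute mult.left_commute mult_minus1_right)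
    have w: "bf {i} \<and>\<^sub>w bf K = shuffle_sign {i} K *\<^sub>R bf (insert i K)" using True by (simp add: wedge_bf)
    have it: "interior j (bf (insert i K)) = shuffle_sign {j} (insert i K - {j}) *\<^sub>R bf (insert i K - {j})"
      using True by (simp add: interior_bf)
    have "interior j (bf {i} \<and>\<^sub>w bf K) = (shuffle_sign {i} K * shuffle_sign {j} (insert i K - {j})) *\<^sub>R bf ({i} \<union> M)"
      unfolding w linear_scale[OF linear_interior] it e1 by simp
    moreover have "bf {i} \<and>\<^sub>w interior j (bf K) = (shuffle_sign {j} M * shuffle_sign {i} M) *\<^sub>R bf ({i} \<union> M)"
    proof -
      have "interior j (bf K) = shuffle_sign {j} M *\<^sub>R bf M" using True by (simp add: interior_bf M_def)
      moreover have "bf {i} \<and>\<^sub>w bf M = shuffle_sign {i} M *\<^sub>R bf ({i} \<union> M)" using K(3) by (simp add: wedge_bf)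
      ultimately show ?thesis by (simp add: wedge_scale_right)
    qed
    ultimately show ?thesis using \<open>i \<noteq> j\<close> s3 by simp
  next
    case nT: False
    show ?thesis
    proof (cases "j \<in> K")
      case True
      hence "i \<in> K" using nT by auto
      then show ?thesis using True \<open>i \<noteq> j\<close> by (simp add: wedge_bf interior_bf wedge_scale_right)
    next
      case False
      then show ?thesis using \<open>i \<noteq> j\<close> by (simp add: wedge_bf interior_bf linear_scale[OF linear_interior])
    qed
  qed
qed

lemma interior_gen: "interior j (bf {i} \<and>\<^sub>w b) = (if i = j then b else 0) - bf {i} \<and>\<^sub>w interior j b"
  by (rule linear_eq_bf[where f="\<lambda>b. interior j (bf {i} \<and>\<^sub>w b)" and g="\<lambda>b. (if i = j then b else 0) - bf {i} \<and>\<^sub>w interior j b"])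
    (auto intro!: linearI simp: wedge_lin interior_gen_bf linear_add[OF linear_interior] linear_scale[OF linear_interior] algebra_simps)

subsection \<open>Derivations\<close>

lemma bf_insert_min: "\<forall>x\<in>I. m < x \<Longrightarrow> bf (insert m I) = bf {m} \<and>\<^sub>w bf I"
proof -
  assume a: "\<forall>x\<in>I. m < x"
  hence "m \<notin> I" by auto
  thus ?thesis using ss_min[OF a] by (simp add: wedge_bf)
qed

lemma deriv_gen:
  fixes D :: "'n::{finite,linorder} form \<Rightarrow> 'n form"
  assumes lin: "linear D"
    and gen: "\<And>i b. D (bf {i} \<and>\<^sub>w b) = D (bf {i}) \<and>\<^sub>w b + s *\<^sub>R (bf {i} \<and>\<^sub>w D b)"
    and D0: "D (bf {}) = 0"
  shows "D (bf I \<and>\<^sub>w b) = D (bf I) \<and>\<^sub>w b + s ^ card I *\<^sub>R (bf I \<and>\<^sub>w D b)"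
proof -
  have "finite I" by simp
  thus ?thesis
  proof (induction I arbitrary: b rule: finite_linorder_min_induct)
    case empty then show ?case by (simp add: D0)
  next
    case (insert m I)
    have mI: "m \<notin> I" using insert.hyps by auto
    have e: "bf (insert m I) = bf {m} \<and>\<^sub>w bf I" using bf_insert_min insert.hyps by blast
    have "D (bf (insert m I) \<and>\<^sub>w b) = D (bf {m} \<and>\<^sub>w (bf I \<and>\<^sub>w b))" by (simp add: e wedge_assoc)
    also have "\<dots> = D (bf {m}) \<and>\<^sub>w (bf I \<and>\<^sub>w b) + s *\<^sub>R (bf {m} \<and>\<^sub>w (D (bf I) \<and>\<^sub>w b + s ^ card I *\<^sub>R (bf I \<and>\<^sub>w D b)))"
      by (simp add: gen insert.IH)
    also have "\<dots> = D (bf (insert m I)) \<and>\<^sub>w b + s ^ card (insert m I) *\<^sub>R (bf (insert m I) \<and>\<^sub>w D b)"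
      by (simp add: e gen wedge_lin wedge_assoc mI algebra_simps)
    finally show ?case .
  qed
qed

lemma deriv_hom:
  fixes D :: "'n::{finite,linorder} form \<Rightarrow> 'n form"
  assumes lin: "linear D"
    and gen: "\<And>i b. D (bf {i} \<and>\<^sub>w b) = D (bf {i}) \<and>\<^sub>w b + s *\<^sub>R (bf {i} \<and>\<^sub>w D b)"
    and D0: "D (bf {}) = 0"
    and a: "a \<in> Lam (int p)"
  shows "D (a \<and>\<^sub>w b) = D a \<and>\<^sub>w b + s ^ p *\<^sub>R (a \<and>\<^sub>w D b)"
  by (rule linear_eq_bf_supp[where f="\<lambda>a. D (a \<and>\<^sub>w b)" and g="\<lambda>a. D a \<and>\<^sub>w b + s ^ p *\<^sub>R (a \<and>\<^sub>w D b)"])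
    (auto intro!: linearI simp: wedge_lin linear_add[OF lin] linear_scale[OF lin] algebra_simps
      deriv_gen[OF lin gen D0] Lam_supp_nat[OF a])

lemma deriv_even:
  fixes D :: "'n::{finite,linorder} form \<Rightarrow> 'n form"
  assumes lin: "linear D"
    and gen: "\<And>i b. D (bf {i} \<and>\<^sub>w b) = D (bf {i}) \<and>\<^sub>w b + bf {i} \<and>\<^sub>w D b"
    and D0: "D (bf {}) = 0"
  shows "D (a \<and>\<^sub>w b) = D a \<and>\<^sub>w b + a \<and>\<^sub>w D b"
proof -
  have gen': "\<And>i b. D (bf {i} \<and>\<^sub>w b) = D (bf {i}) \<and>\<^sub>w b + (1::real) *\<^sub>R (bf {i} \<and>\<^sub>w D b)" using gen by simp
  show ?thesis
    by (rule linear_eq_bf[where f="\<lambda>a. D (a \<and>\<^sub>w b)" and g="\<lambda>a. D a \<and>\<^sub>w b + a \<and>\<^sub>w D b"])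
      (auto intro!: linearI simp: wedge_lin linear_add[OF lin] linear_scale[OF lin] algebra_simps
        deriv_gen[OF lin gen' D0])
qed

lemma deriv_zero:
  fixes D :: "'n::{finite,linorder} form \<Rightarrow> 'n form"
  assumes lin: "linear D"
    and gen: "\<And>i b. D (bf {i} \<and>\<^sub>w b) = D (bf {i}) \<and>\<^sub>w b + s *\<^sub>R (bf {i} \<and>\<^sub>w D b)"
    and D0: "D (bf {}) = 0"
    and D1: "\<And>i. D (bf {i}) = 0"
  shows "D x = 0"
proof -
  have b: "D (bf I) = 0" for I
  proof -
    have "finite I" by simp
    thus ?thesis
    proof (induction I rule: finite_linorder_min_induct)
      case empty then show ?case by (simp add: D0)
    next
      case (insert m I)
      have e: "bf (insert m I) = bf {m} \<and>\<^sub>w bf I" using bf_insert_min insert.hyps by blast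
      show ?case by (simp add: e gen D1 insert.IH)
    qed
  qed
  show ?thesis
    by (rule linear_eq_bf[where f=D and g="\<lambda>x. 0"]) (auto intro!: linearI simp: lin b)
qed

lemma wedge_anti1: "bf {i} \<and>\<^sub>w (bf {k} \<and>\<^sub>w x) = - (bf {k} \<and>\<^sub>w (bf {i} \<and>\<^sub>w x))"
proof -
  have "bf {i} \<and>\<^sub>w bf {k} = - (bf {k} \<and>\<^sub>w bf {i})"
    using wedge_comm_bf[of "{i}" "{k}"] by simp
  thus ?thesis by (metis wedge_assoc wedge_neg_left)
qed

definition Eop :: "'n::{finite,linorder} \<Rightarrow> 'n \<Rightarrow> 'n form \<Rightarrow> 'n form" where
  "Eop i j w = bf {i} \<and>\<^sub>w interior j w"

lemma linear_Eop: "linear (Eop i j)"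
  by (intro linearI) (simp_all add: Eop_def linear_add[OF linear_interior] linear_scale[OF linear_interior] wedge_lin)

lemma Eop_deriv: "Eop i j (a \<and>\<^sub>w b) = Eop i j a \<and>\<^sub>w b + a \<and>\<^sub>w Eop i j b"
proof (rule deriv_even[OF linear_Eop])
  fix k b
  show "Eop i j (bf {k} \<and>\<^sub>w b) = Eop i j (bf {k}) \<and>\<^sub>w b + bf {k} \<and>\<^sub>w Eop i j b"
    by (simp add: Eop_def interior_gen interior_single wedge_lin wedge_anti1[of i k])
qed (simp add: Eop_def)

lemma ad_action_Eop: "ad_action c x w = (\<Sum>i\<in>UNIV. \<Sum>j\<in>UNIV. (bracket c x (axis j 1) $ i) *\<^sub>R Eop i j w)"
  by (simp add: ad_action_def Eop_def)

lemma linear_ad: "linear (ad_action c x)"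
  by (intro linearI) (simp_all add: ad_action_Eop linear_add[OF linear_Eop] linear_scale[OF linear_Eop]
      scaleR_add_right sum.distrib scaleR_sum_right mult.commute)

lemma ad_deriv: "ad_action c x (a \<and>\<^sub>w b) = ad_action c x a \<and>\<^sub>w b + a \<and>\<^sub>w ad_action c x b"
  by (simp add: ad_action_Eop Eop_deriv wedge_lin scaleR_add_right sum.distrib)

lemma ad_empty[simp]: "ad_action c x (bf {}) = 0"
  by (simp add: ad_action_def)

lemma sum_axis: "(\<Sum>a\<in>UNIV. (axis m (1::real)) $ a * g a) = g m"
proof -
  have "\<And>a. axis m (1::real) $ a * g a = (if a = m then g m else 0)" by (simp add: axis_def)
  thus ?thesis by simp
qed

lemma bracket_axis: "bracket c (axis m 1) (axis j 1) $ i = c m j i"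
proof -
  have "(\<Sum>b\<in>UNIV. axis m 1 $ a * axis j 1 $ b * c a b i) = axis m 1 $ a * c a j i" for a
  proof -
    have "(\<Sum>b\<in>UNIV. axis m 1 $ a * axis j 1 $ b * c a b i) = (\<Sum>b\<in>UNIV. axis j (1::real) $ b * (axis m 1 $ a * c a b i))"
      by (rule sum.cong) (simp_all add: mult_ac)
    also have "\<dots> = axis m 1 $ a * c a j i" by (rule sum_axis)
    finally show ?thesis .
  qed
  hence "bracket c (axis m 1) (axis j 1) $ i = (\<Sum>a\<in>UNIV. axis m 1 $ a * c a j i)"
    by (simp add: bracket_def)
  also have "\<dots> = c m j i" by (rule sum_axis)
  finally show ?thesis .
qed

lemma th_alt: "ad_action c (axis m 1) w = (\<Sum>i\<in>UNIV. \<Sum>j\<in>UNIV. c m j i *\<^sub>R (bf {i} \<and>\<^sub>w interior j w))"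
  by (simp add: ad_action_def bracket_axis)

lemma th_single: "ad_action c (axis m 1) (bf {j}) = (\<Sum>i\<in>UNIV. c m j i *\<^sub>R bf {i})"
proof -
  have "\<And>i j'. c m j' i *\<^sub>R (bf {i} \<and>\<^sub>w interior j' (bf {j})) = (if j' = j then c m j i *\<^sub>R bf {i} else 0)"
    by (simp add: interior_single)
  thus ?thesis by (simp add: th_alt)
qed

lemma adj_e: "(bf {i} \<and>\<^sub>w a) \<bullet> b = a \<bullet> interior i b"
proof (rule linear_eq_bf[where f="\<lambda>b. (bf {i} \<and>\<^sub>w a) \<bullet> b" and g="\<lambda>b. a \<bullet> interior i b"])
  show "linear (\<lambda>b. (bf {i} \<and>\<^sub>w a) \<bullet> b)"
    by (intro linearI) (simp_all add: inner_add_right)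
  show "linear (\<lambda>b. a \<bullet> interior i b)"
    by (intro linearI) (simp_all add: inner_add_right linear_add[OF linear_interior] linear_scale[OF linear_interior])
  fix B
  show "(bf {i} \<and>\<^sub>w a) \<bullet> bf B = a \<bullet> interior i (bf B)"
    by (simp add: inner_bf_right wedge_bf_left interior_bf)
qed

lemma adj_e': "a \<bullet> (bf {i} \<and>\<^sub>w b) = interior i a \<bullet> b"
  by (metis adj_e inner_commute)

subsection \<open>Lie algebra facts\<close>

lemma swap3: "(\<Sum>a\<in>UNIV. \<Sum>b\<in>UNIV. \<Sum>c\<in>UNIV. f a b c) = (\<Sum>b\<in>UNIV. \<Sum>c\<in>UNIV. \<Sum>a\<in>UNIV. (f a b c :: real))"
proof -
  have "(\<Sum>a\<in>UNIV. \<Sum>b\<in>UNIV. \<Sum>c\<in>UNIV. f a b c) = (\<Sum>b\<in>UNIV. \<Sum>a\<in>UNIV. \<Sum>c\<in>UNIV. f a b c)"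
    by (rule sum.swap)
  also have "\<dots> = (\<Sum>b\<in>UNIV. \<Sum>c\<in>UNIV. \<Sum>a\<in>UNIV. f a b c)"
    by (rule sum.cong[OF refl], rule sum.swap)
  finally show ?thesis .
qed

lemma c_anti12:
  assumes "is_lie_algebra c"
  shows "c i j k = - c j i k"
  using assms unfolding is_lie_algebra_def by blast

lemma ad_hom:
  fixes c :: "'n::finite \<Rightarrow> 'n \<Rightarrow> 'n \<Rightarrow> real"
  assumes lie: "is_lie_algebra c"
  shows "(\<Sum>m\<in>UNIV. c i j m * c m q p) = (\<Sum>r\<in>UNIV. c i r p * c j q r - c j r p * c i q r)"
proof -
  have J: "(\<Sum>m\<in>UNIV. c i j m * c m q p + c j q m * c m i p + c q i m * c m j p) = 0"
    using lie unfolding is_lie_algebra_def by blast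
  have "(\<Sum>m\<in>UNIV. c i j m * c m q p) = - (\<Sum>m\<in>UNIV. c j q m * c m i p) - (\<Sum>m\<in>UNIV. c q i m * c m j p)"
    using J unfolding sum.distrib by linarith
  also have "(\<Sum>m\<in>UNIV. c j q m * c m i p) = - (\<Sum>m\<in>UNIV. c i m p * c j q m)"
  proof -
    have t: "c j q m * c m i p = - (c i m p * c j q m)" for m
      using c_anti12[OF lie, of m i p] by simp
    show ?thesis by (simp only: t sum_negf)
  qed
  also have "(\<Sum>m\<in>UNIV. c q i m * c m j p) = (\<Sum>m\<in>UNIV. c j m p * c i q m)"
  proof -
    have t: "c q i m * c m j p = c j m p * c i q m" for m
      using c_anti12[OF lie, of q i m] c_anti12[OF lie, of m j p] by simp
    show ?thesis by (simp only: t)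
  qed
  finally show ?thesis by (simp add: sum_subtractf)
qed

lemma c_anti23:
  fixes c :: "'n::finite \<Rightarrow> 'n \<Rightarrow> 'n \<Rightarrow> real"
  assumes lie: "is_lie_algebra c" and kill: "\<And>i j. killing c i j = - (if i = j then 1 else 0)"
  shows "c i j k = - c i k j"
proof -
  define T1 where "T1 = (\<Sum>p\<in>UNIV. \<Sum>q\<in>UNIV. \<Sum>r\<in>UNIV. c i r p * c j q r * c k p q)"
  define T2 where "T2 = (\<Sum>p\<in>UNIV. \<Sum>q\<in>UNIV. \<Sum>r\<in>UNIV. c j r p * c i q r * c k p q)"
  have a1: "(\<Sum>m\<in>UNIV. c i j m * killing c m k) = T1 - T2"
  proof -
    have "(\<Sum>m\<in>UNIV. c i j m * killing c m k) = (\<Sum>m\<in>UNIV. \<Sum>p\<in>UNIV. \<Sum>q\<in>UNIV. c i j m * c m q p * c k p q)"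
      by (simp add: killing_def sum_distrib_left mult.assoc)
    also have "\<dots> = (\<Sum>p\<in>UNIV. \<Sum>q\<in>UNIV. \<Sum>m\<in>UNIV. c i j m * c m q p * c k p q)"
      by (rule swap3)
    also have "\<dots> = (\<Sum>p\<in>UNIV. \<Sum>q\<in>UNIV. (\<Sum>m\<in>UNIV. c i j m * c m q p) * c k p q)"
      by (simp add: sum_distrib_right)
    also have "\<dots> = (\<Sum>p\<in>UNIV. \<Sum>q\<in>UNIV. (\<Sum>r\<in>UNIV. c i r p * c j q r - c j r p * c i q r) * c k p q)"
      by (simp add: ad_hom[OF lie])
    also have "\<dots> = T1 - T2"
      by (simp add: T1_def T2_def sum_distrib_right sum_subtractf left_diff_distrib)
    finally show ?thesis .
  qed
  have a2: "(\<Sum>m\<in>UNIV. c i k m * killing c j m) = T2 - T1"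
  proof -
    have "(\<Sum>m\<in>UNIV. c i k m * killing c j m) = (\<Sum>m\<in>UNIV. \<Sum>p\<in>UNIV. \<Sum>q\<in>UNIV. c i k m * c m p q * c j q p)"
      by (simp add: killing_def sum_distrib_left mult_ac)
    also have "\<dots> = (\<Sum>p\<in>UNIV. \<Sum>q\<in>UNIV. \<Sum>m\<in>UNIV. c i k m * c m p q * c j q p)"
      by (rule swap3)
    also have "\<dots> = (\<Sum>p\<in>UNIV. \<Sum>q\<in>UNIV. (\<Sum>m\<in>UNIV. c i k m * c m p q) * c j q p)"
      by (simp add: sum_distrib_right)
    also have "\<dots> = (\<Sum>p\<in>UNIV. \<Sum>q\<in>UNIV. (\<Sum>r\<in>UNIV. c i r q * c k p r - c k r q * c i p r) * c j q p)"
      by (simp add: ad_hom[OF lie])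
    also have "\<dots> = (\<Sum>p\<in>UNIV. \<Sum>q\<in>UNIV. \<Sum>r\<in>UNIV. c i r q * c k p r * c j q p)
                 - (\<Sum>p\<in>UNIV. \<Sum>q\<in>UNIV. \<Sum>r\<in>UNIV. c k r q * c i p r * c j q p)"
      by (simp add: sum_distrib_right sum_subtractf left_diff_distrib)
    also have "(\<Sum>p\<in>UNIV. \<Sum>q\<in>UNIV. \<Sum>r\<in>UNIV. c i r q * c k p r * c j q p) = T2"
    proof -
      have "(\<Sum>p\<in>UNIV. \<Sum>q\<in>UNIV. \<Sum>r\<in>UNIV. c i r q * c k p r * c j q p)
          = (\<Sum>p\<in>UNIV. \<Sum>r\<in>UNIV. \<Sum>q\<in>UNIV. c i r q * c k p r * c j q p)"
        by (rule sum.cong[OF refl], rule sum.swap)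
      thus ?thesis by (simp add: T2_def mult_ac)
    qed
    also have "(\<Sum>p\<in>UNIV. \<Sum>q\<in>UNIV. \<Sum>r\<in>UNIV. c k r q * c i p r * c j q p) = T1"
    proof -
      have "(\<Sum>p\<in>UNIV. \<Sum>q\<in>UNIV. \<Sum>r\<in>UNIV. c k r q * c i p r * c j q p)
          = (\<Sum>q\<in>UNIV. \<Sum>r\<in>UNIV. \<Sum>p\<in>UNIV. c k r q * c i p r * c j q p)"
        by (rule swap3)
      also have "\<dots> = (\<Sum>r\<in>UNIV. \<Sum>q\<in>UNIV. \<Sum>p\<in>UNIV. c k r q * c i p r * c j q p)"
        by (rule sum.swap)
      finally show ?thesis by (simp add: T1_def mult_ac)
    qed
    finally show ?thesis .
  qed
  have "(\<Sum>m\<in>UNIV. c i j m * killing c m k) = - c i j k"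
    by (simp add: kill if_distrib cong: if_cong)
  moreover have "(\<Sum>m\<in>UNIV. c i k m * killing c j m) = - c i k j"
    by (simp add: kill if_distrib cong: if_cong)
  ultimately show ?thesis using a1 a2 by linarith
qed



abbreviation th :: "('n::{finite,linorder} \<Rightarrow> 'n \<Rightarrow> 'n \<Rightarrow> real) \<Rightarrow> 'n \<Rightarrow> 'n form \<Rightarrow> 'n form" where
  "th c m \<equiv> ad_action c (axis m 1)"

lemma th_skew:
  assumes anti: "\<And>i j k. c i j k = - c i k j"
  shows "(th c m a) \<bullet> b = - (a \<bullet> th c m b)"
proof -
  have l: "(th c m a) \<bullet> b = (\<Sum>i\<in>UNIV. \<Sum>j\<in>UNIV. c m j i * (interior j a \<bullet> interior i b))"
    by (simp add: th_alt inner_sum_left adj_e)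
  have "a \<bullet> th c m b = (\<Sum>i\<in>UNIV. \<Sum>j\<in>UNIV. c m j i * (interior i a \<bullet> interior j b))"
    by (simp add: th_alt inner_sum_right adj_e')
  also have "\<dots> = (\<Sum>j\<in>UNIV. \<Sum>i\<in>UNIV. c m j i * (interior i a \<bullet> interior j b))"
    by (rule sum.swap)
  also have "\<dots> = (\<Sum>i\<in>UNIV. \<Sum>j\<in>UNIV. - (c m j i * (interior j a \<bullet> interior i b)))"
  proof -
    have t: "c m i j * (interior j a \<bullet> interior i b) = - (c m j i * (interior j a \<bullet> interior i b))" for i j
      using anti[of m i j] by simp
    show ?thesis by (simp only: t)
  qed
  finally show ?thesis using l by (simp add: sum_negf)
qed

definition dop :: "('n::{finite,linorder} \<Rightarrow> 'n \<Rightarrow> 'n \<Rightarrow> real) \<Rightarrow> 'n form \<Rightarrow> 'n form" where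
  "dop c w = (- 1/2) *\<^sub>R (\<Sum>i\<in>UNIV. bf {i} \<and>\<^sub>w th c i w)"

lemma linear_dop: "linear (dop c)"
  by (intro linearI) (simp_all add: dop_def linear_add[OF linear_ad] linear_scale[OF linear_ad]
      wedge_lin sum.distrib scaleR_sum_right scaleR_add_right)

lemma dop_empty[simp]: "dop c (bf {}) = 0"
  by (simp add: dop_def)

lemma dop_gen: "dop c (bf {k} \<and>\<^sub>w b) = dop c (bf {k}) \<and>\<^sub>w b + (-1) *\<^sub>R (bf {k} \<and>\<^sub>w dop c b)"
proof -
  have "(\<Sum>i\<in>UNIV. bf {i} \<and>\<^sub>w th c i (bf {k} \<and>\<^sub>w b))
     = (\<Sum>i\<in>UNIV. bf {i} \<and>\<^sub>w th c i (bf {k})) \<and>\<^sub>w b - bf {k} \<and>\<^sub>w (\<Sum>i\<in>UNIV. bf {i} \<and>\<^sub>w th c i b)"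
    by (simp add: ad_deriv wedge_lin wedge_assoc wedge_anti1[of _ k] sum.distrib sum_negf sum_subtractf)
  note h = this
  show ?thesis unfolding dop_def h by (simp add: wedge_scale_left wedge_scale_right scaleR_diff_right wedge_neg_left wedge_neg_right)
qed

lemma sum2_delta: "(\<Sum>i\<in>UNIV. \<Sum>a\<in>UNIV. if i = (p::'n::finite) \<and> a = (q::'n) then (X::real) else 0) = X"
proof -
  have "\<And>i. (\<Sum>a\<in>UNIV. if i = p \<and> a = q then X else 0) = (if i = p then X else 0)"
    by (case_tac "i = p") simp_all
  thus ?thesis by simp
qed

lemma single_wedge_nth: "(bf {i} \<and>\<^sub>w bf {a}) $ K = (if i \<noteq> a \<and> K = {i, a} then shuffle_sign {i} {a} else 0)"
  by (cases "i = a") (auto simp add: wedge_bf bf_nth insert_commute)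

lemma wedge_pair_nth:
  assumes pq: "(p::'n::{finite,linorder}) < q"
  shows "(bf {i} \<and>\<^sub>w bf {a}) $ {p, q} = (if i = p \<and> a = q then 1 else 0) + (if i = q \<and> a = p then -1 else (0::real))"
proof -
  have s1: "shuffle_sign {p} {q} = 1" using pq by (intro ss_min) simp
  have s2: "shuffle_sign {q} {p} = -1" using ss_single_swap[of p q] s1 pq by simp
  consider "i = p \<and> a = q" | "i = q \<and> a = p" | "\<not> (i = p \<and> a = q) \<and> \<not> (i = q \<and> a = p)" by blast
  thus ?thesis
  proof cases
    case 1 thus ?thesis using pq s1 by (simp add: single_wedge_nth)
  next
    case 2 thus ?thesis using pq s2 by (simp add: single_wedge_nth insert_commute)
  next
    case 3
    have h: "\<not> (i \<noteq> a \<and> {p, q} = {i, a})" using 3 by (metis doubleton_eq_iff)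
    have l: "(bf {i} \<and>\<^sub>w bf {a}) $ {p, q} = 0" unfolding single_wedge_nth using h by (simp only: if_False)
    have r: "(if i = p \<and> a = q then 1 else 0) + (if i = q \<and> a = p then -1 else (0::real)) = 0"
      using 3 by (simp only: if_False add_0)
    show ?thesis using l r by simp
  qed
qed



lemma dop_single:
  fixes c :: "'n::{finite,linorder} \<Rightarrow> 'n \<Rightarrow> 'n \<Rightarrow> real"
  assumes anti12: "\<And>i j k. c i j k = - c j i k" and anti23: "\<And>i j k. c i j k = - c i k j"
  shows "dop c (bf {j}) = d1 c j"
proof (rule form_eq_coords)
  fix K :: "'n set"
  have e: "dop c (bf {j}) $ K = (- 1/2) * (\<Sum>i\<in>UNIV. \<Sum>a\<in>UNIV. c i j a * (bf {i} \<and>\<^sub>w bf {a}) $ K)"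
    by (simp add: dop_def th_single wedge_lin sum_component)
  show "dop c (bf {j}) $ K = d1 c j $ K"
  proof (cases "card K = 2")
    case True
    then obtain p q where pq: "K = {p, q}" "p \<noteq> q" by (meson card_2_iff)
    define p' q' where "p' = min p q" and "q' = max p q"
    have pq': "K = {p', q'}" "p' < q'" using pq by (auto simp: p'_def q'_def min_def max_def)
    have s1: "shuffle_sign {p'} {q'} = 1" using pq' by (intro ss_min) simp
    have s2: "shuffle_sign {q'} {p'} = -1" using ss_single_swap[of p' q'] s1 pq' by simp
    have coord: "c i j a * (bf {i} \<and>\<^sub>w bf {a}) $ K = (if i = p' \<and> a = q' then c p' j q' else 0) + (if i = q' \<and> a = p' then - c q' j p' else 0)" for i a
    proof -
      have nq: "p' \<noteq> q'" "q' \<noteq> p'" using pq'(2) by auto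
      show ?thesis unfolding pq'(1) wedge_pair_nth[OF pq'(2)]
        by (cases "i = p'"; cases "a = q'"; cases "i = q'"; cases "a = p'") (simp_all add: nq)
    qed
    have "dop c (bf {j}) $ K = (- 1/2) * (c p' j q' - c q' j p')"
      unfolding e coord by (simp add: sum.distrib sum2_delta)
    also have "\<dots> = c p' q' j"
      using anti23[of p' j q'] anti23[of q' j p'] anti12[of q' p' j] by simp
    also have "\<dots> = d1 c j $ K"
    proof -
      have "Min K = p'" "Max K = q'" using pq' by auto
      thus ?thesis using True by (simp add: d1_def)
    qed
    finally show ?thesis .
  next
    case False
    have "(bf {i} \<and>\<^sub>w bf {a}) $ K = 0" for i a
      using False by (auto simp: single_wedge_nth)
    thus ?thesis using False by (simp add: e d1_def)
  qed
qed

lemma sorted_insert_min: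
  "\<forall>x\<in>I. m < x \<Longrightarrow> sorted_list_of_set (insert m (I::'n::{finite,linorder} set)) = m # sorted_list_of_set I"
proof -
  assume a: "\<forall>x\<in>I. m < x"
  have "Min (insert m I) = m" using a by (intro Min_eqI) (auto simp: less_imp_le)
  moreover have "insert m I - {m} = I" using a by auto
  ultimately show ?thesis using sorted_list_of_set_nonempty[of "insert m I"] by simp
qed

lemma wedge_list_sorted: "wedge_list (sorted_list_of_set J) = bf (J::'n::{finite,linorder} set)"
proof -
  have "finite J" by simp
  thus ?thesis
  proof (induction J rule: finite_linorder_min_induct)
    case empty then show ?case by simp
  next
    case (insert m I)
    thus ?case by (subst sorted_insert_min[OF insert.hyps(2)]) (simp add: bf_insert_min[OF insert.hyps(2)])
  qed
qed

lemma d_list_dop: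
  fixes c :: "'n::{finite,linorder} \<Rightarrow> 'n \<Rightarrow> 'n \<Rightarrow> real"
  assumes anti12: "\<And>i j k. c i j k = - c j i k" and anti23: "\<And>i j k. c i j k = - c i k j"
  shows "d_list c (sorted_list_of_set J) = dop c (bf J)"
proof -
  have "finite J" by simp
  thus ?thesis
  proof (induction J rule: finite_linorder_min_induct)
    case empty then show ?case by simp
  next
    case (insert m I)
    have "dop c (bf (insert m I)) = dop c (bf {m}) \<and>\<^sub>w bf I - bf {m} \<and>\<^sub>w dop c (bf I)"
      using insert.hyps by (simp add: bf_insert_min[OF insert.hyps(2)] dop_gen)
    thus ?case using insert by (subst sorted_insert_min[OF insert.hyps(2)]) (simp add: wedge_list_sorted dop_single[OF anti12 anti23])
  qed
qed

lemma d_g_dop: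
  fixes c :: "'n::{finite,linorder} \<Rightarrow> 'n \<Rightarrow> 'n \<Rightarrow> real"
  assumes anti12: "\<And>i j k. c i j k = - c j i k" and anti23: "\<And>i j k. c i j k = - c i k j"
  shows "d_g c w = dop c w"
proof -
  have "d_g c w = (\<Sum>J\<in>UNIV. w $ J *\<^sub>R dop c (bf J))"
    by (simp add: d_g_def d_list_dop[OF anti12 anti23])
  also have "\<dots> = dop c w"
    by (subst (2) form_expand) (simp add: linear_sum[OF linear_dop] linear_scale[OF linear_dop])
  finally show ?thesis .
qed




definition dl :: "('n::{finite,linorder} \<Rightarrow> 'n \<Rightarrow> 'n \<Rightarrow> real) \<Rightarrow> 'n form \<Rightarrow> 'n form" where
  "dl c w = (1/2) *\<^sub>R (\<Sum>i\<in>UNIV. th c i (interior i w))"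

lemma linear_dl: "linear (dl c)"
  by (intro linearI) (simp_all add: dl_def linear_add[OF linear_ad] linear_scale[OF linear_ad]
      linear_add[OF linear_interior] linear_scale[OF linear_interior]
      sum.distrib scaleR_sum_right scaleR_add_right)

lemma delta_dl:
  fixes c :: "'n::{finite,linorder} \<Rightarrow> 'n \<Rightarrow> 'n \<Rightarrow> real"
  assumes anti12: "\<And>i j k. c i j k = - c j i k" and anti23: "\<And>i j k. c i j k = - c i k j"
  shows "delta_g c w = dl c w"
proof (rule form_eq_coords)
  fix I
  have "delta_g c w $ I = dop c (bf I) \<bullet> w"
    by (simp add: delta_g_def form_inner_eq d_g_dop[OF anti12 anti23])
  also have "\<dots> = (- 1/2) * (\<Sum>i\<in>UNIV. (bf {i} \<and>\<^sub>w th c i (bf I)) \<bullet> w)"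
    by (simp add: dop_def inner_sum_left)
  also have "\<dots> = (- 1/2) * (\<Sum>i\<in>UNIV. th c i (bf I) \<bullet> interior i w)"
    by (simp only: adj_e)
  also have "\<dots> = (1/2) * (\<Sum>i\<in>UNIV. bf I \<bullet> th c i (interior i w))"
    by (simp add: th_skew[OF anti23] sum_negf)
  also have "\<dots> = dl c w $ I"
    by (simp add: dl_def inner_bf_left sum_component)
  finally show "delta_g c w $ I = dl c w $ I" .
qed

lemma interior_anti: "interior i (interior b x) = - interior b (interior i x)"
proof (rule form_eq_coords)
  fix K
  have "interior i (interior b x) $ K = bf K \<bullet> interior i (interior b x)" by (simp add: inner_bf_left)
  also have "\<dots> = (bf {b} \<and>\<^sub>w (bf {i} \<and>\<^sub>w bf K)) \<bullet> x" by (simp only: adj_e)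
  also have "\<dots> = - ((bf {i} \<and>\<^sub>w (bf {b} \<and>\<^sub>w bf K)) \<bullet> x)" by (simp add: wedge_anti1[of b i])
  also have "\<dots> = - (bf K \<bullet> interior b (interior i x))" by (simp only: adj_e)
  finally show "interior i (interior b x) $ K = (- interior b (interior i x)) $ K" by (simp add: inner_bf_left)
qed

lemma c_diag:
  fixes c :: "'n::{finite,linorder} \<Rightarrow> 'n \<Rightarrow> 'n \<Rightarrow> real"
  assumes anti12: "\<And>i j k. c i j k = - c j i k" and anti23: "\<And>i j k. c i j k = - c i k j"
  shows "c m b m = 0"
proof -
  have "c m m b = 0" using anti12[of m m b] by simp
  thus ?thesis using anti23[of m b m] by simp
qed

lemma th_interior_comm:
  fixes c :: "'n::{finite,linorder} \<Rightarrow> 'n \<Rightarrow> 'n \<Rightarrow> real"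
  assumes anti12: "\<And>i j k. c i j k = - c j i k" and anti23: "\<And>i j k. c i j k = - c i k j"
  shows "(\<Sum>m\<in>UNIV. th c m (interior m x)) = (\<Sum>m\<in>UNIV. interior m (th c m x))"
proof -
  have r: "interior m (th c m x) = th c m (interior m x)" for m
  proof -
    have t: "interior m (bf {a} \<and>\<^sub>w interior b x) = (if a = m then interior b x else 0) + bf {a} \<and>\<^sub>w interior b (interior m x)" for a b
      using interior_gen[of m a "interior b x"] interior_anti[of m b x] by (simp add: wedge_neg_right)
    have z: "c m b a *\<^sub>R (if a = m then interior b x else 0) = 0" for a b
      using c_diag[OF anti12 anti23, where m=m and b=b] by auto
    have "interior m (th c m x) = (\<Sum>a\<in>UNIV. \<Sum>b\<in>UNIV. c m b a *\<^sub>R interior m (bf {a} \<and>\<^sub>w interior b x))"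
      by (simp add: th_alt linear_sum[OF linear_interior] linear_scale[OF linear_interior])
    also have "\<dots> = (\<Sum>a\<in>UNIV. \<Sum>b\<in>UNIV. c m b a *\<^sub>R (bf {a} \<and>\<^sub>w interior b (interior m x)))"
      by (simp only: t scaleR_add_right z add_0)
    also have "\<dots> = th c m (interior m x)"
      by (simp add: th_alt)
    finally show ?thesis .
  qed
  show ?thesis by (simp add: r)
qed

definition Xop :: "('n::{finite,linorder} \<Rightarrow> 'n \<Rightarrow> 'n \<Rightarrow> real) \<Rightarrow> 'n form \<Rightarrow> 'n form \<Rightarrow> 'n form" where
  "Xop c p w = (\<Sum>i\<in>UNIV. interior i p \<and>\<^sub>w th c i w)"

lemma int_Lam1: "bf {i} \<in> Lam (int 1)"
  using bf_Lam[of "{i}"] by simp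

lemma Xop_zero:
  fixes c :: "'n::{finite,linorder} \<Rightarrow> 'n \<Rightarrow> 'n \<Rightarrow> real"
  assumes anti12: "\<And>i j k. c i j k = - c j i k" and anti23: "\<And>i j k. c i j k = - c i k j"
    and inv: "\<And>x. ad_action c x p = 0" and phi: "p \<in> Lam (int l)" and l1: "1 \<le> l"
  shows "Xop c p w = 0"
proof (rule deriv_zero[where D="Xop c p" and s="(-1) ^ (l - 1)"])
  show "linear (Xop c p)"
    by (intro linearI) (simp_all add: Xop_def linear_add[OF linear_ad] linear_scale[OF linear_ad]
      wedge_lin sum.distrib scaleR_sum_right)
  have iL: "interior i p \<in> Lam (int (l - 1))" for i
    using interior_Lam[OF phi, of i] l1 by (simp add: of_nat_diff)
  have cm: "interior i p \<and>\<^sub>w (bf {k} \<and>\<^sub>w y) = (-1) ^ (l - 1) *\<^sub>R (bf {k} \<and>\<^sub>w (interior i p \<and>\<^sub>w y))" for i k y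
    using wedge_comm[OF iL[of i] int_Lam1[of k]] by (simp add: wedge_assoc[symmetric] wedge_scale_left)
  fix k b
  show "Xop c p (bf {k} \<and>\<^sub>w b) = Xop c p (bf {k}) \<and>\<^sub>w b + (-1) ^ (l - 1) *\<^sub>R (bf {k} \<and>\<^sub>w Xop c p b)"
    by (simp add: Xop_def ad_deriv wedge_lin cm wedge_assoc sum.distrib scaleR_sum_right)
next
  show "Xop c p (bf {}) = 0" by (simp add: Xop_def)
next
  fix j
  have iL: "interior i p \<in> Lam (int (l - 1))" for i
    using interior_Lam[OF phi, of i] l1 by (simp add: of_nat_diff)
  have cm: "interior i p \<and>\<^sub>w bf {a} = (-1) ^ (l - 1) *\<^sub>R (bf {a} \<and>\<^sub>w interior i p)" for i a
    using wedge_comm[OF iL[of i] int_Lam1[of a]] by simp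
  have t0: "(\<Sum>a\<in>UNIV. \<Sum>b\<in>UNIV. c j b a *\<^sub>R (bf {a} \<and>\<^sub>w interior b p)) = 0"
    using inv[of "axis j 1"] by (simp add: th_alt)
  have "Xop c p (bf {j}) = (\<Sum>i\<in>UNIV. \<Sum>a\<in>UNIV. c i j a *\<^sub>R ((-1) ^ (l - 1) *\<^sub>R (bf {a} \<and>\<^sub>w interior i p)))"
    by (simp add: Xop_def th_single wedge_lin cm)
  also have "\<dots> = - ((-1) ^ (l - 1) *\<^sub>R (\<Sum>i\<in>UNIV. \<Sum>a\<in>UNIV. c j i a *\<^sub>R (bf {a} \<and>\<^sub>w interior i p)))"
  proof -
    have "c i j a *\<^sub>R ((-1) ^ (l - 1) *\<^sub>R (bf {a} \<and>\<^sub>w interior i p)) = - ((-1) ^ (l - 1) *\<^sub>R (c j i a *\<^sub>R (bf {a} \<and>\<^sub>w interior i p)))" for i a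
      using anti12[of i j a] by simp
    thus ?thesis by (simp add: sum_negf scaleR_sum_right)
  qed
  also have "(\<Sum>i\<in>UNIV. \<Sum>a\<in>UNIV. c j i a *\<^sub>R (bf {a} \<and>\<^sub>w interior i p)) = 0"
    using t0 by (subst sum.swap) simp
  finally show "Xop c p (bf {j}) = 0" by simp
qed


lemma int_hom:
  assumes phi: "p \<in> Lam (int l)"
  shows "interior i (p \<and>\<^sub>w w) = interior i p \<and>\<^sub>w w + (-1) ^ l *\<^sub>R (p \<and>\<^sub>w interior i w)"
proof (rule deriv_hom[where D="interior i" and s="-1", OF linear_interior _ _ phi])
  fix k b
  show "interior i (bf {k} \<and>\<^sub>w b) = interior i (bf {k}) \<and>\<^sub>w b + (-1) *\<^sub>R (bf {k} \<and>\<^sub>w interior i b)"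
    by (simp add: interior_gen interior_single)
qed simp

lemma d_ident:
  fixes c :: "'n::{finite,linorder} \<Rightarrow> 'n \<Rightarrow> 'n \<Rightarrow> real"
  assumes anti12: "\<And>i j k. c i j k = - c j i k" and anti23: "\<And>i j k. c i j k = - c i k j"
    and inv: "\<And>x. ad_action c x p = 0" and phi: "p \<in> Lam (int l)"
  shows "d_g c (p \<and>\<^sub>w w) = (-1) ^ l *\<^sub>R (p \<and>\<^sub>w d_g c w)"
proof -
  have cm: "bf {i} \<and>\<^sub>w (p \<and>\<^sub>w y) = (-1) ^ l *\<^sub>R (p \<and>\<^sub>w (bf {i} \<and>\<^sub>w y))" for i y
    using wedge_comm[OF int_Lam1[of i] phi] by (simp add: wedge_assoc[symmetric] wedge_scale_left)
  have "dop c (p \<and>\<^sub>w w) = (- 1/2) *\<^sub>R (\<Sum>i\<in>UNIV. bf {i} \<and>\<^sub>w (p \<and>\<^sub>w th c i w))"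
    using inv by (simp add: dop_def ad_deriv)
  also have "\<dots> = (-1) ^ l *\<^sub>R (p \<and>\<^sub>w dop c w)"
    by (simp add: cm dop_def wedge_lin scaleR_sum_right)
  finally show ?thesis by (simp add: d_g_dop[OF anti12 anti23])
qed

lemma delta_ident:
  fixes c :: "'n::{finite,linorder} \<Rightarrow> 'n \<Rightarrow> 'n \<Rightarrow> real"
  assumes anti12: "\<And>i j k. c i j k = - c j i k" and anti23: "\<And>i j k. c i j k = - c i k j"
    and inv: "\<And>x. ad_action c x p = 0" and phi: "p \<in> Lam (int l)" and l1: "1 \<le> l"
  shows "delta_g c (p \<and>\<^sub>w w) = (-1) ^ l *\<^sub>R (p \<and>\<^sub>w delta_g c w)"
proof -
  have s0: "(\<Sum>i\<in>UNIV. th c i (interior i p)) = 0"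
    by (simp add: th_interior_comm[OF anti12 anti23] inv)
  have x0: "Xop c p w = 0" by (rule Xop_zero[OF anti12 anti23 inv phi l1])
  have "dl c (p \<and>\<^sub>w w) = (1/2) *\<^sub>R (\<Sum>i\<in>UNIV. th c i (interior i p) \<and>\<^sub>w w + interior i p \<and>\<^sub>w th c i w + (-1) ^ l *\<^sub>R (p \<and>\<^sub>w th c i (interior i w)))"
    by (simp add: dl_def int_hom[OF phi] linear_add[OF linear_ad] linear_scale[OF linear_ad] ad_deriv inv)
  also have "\<dots> = (1/2) *\<^sub>R ((\<Sum>i\<in>UNIV. th c i (interior i p)) \<and>\<^sub>w w) + (1/2) *\<^sub>R Xop c p w + (-1) ^ l *\<^sub>R (p \<and>\<^sub>w dl c w)"
    by (simp add: Xop_def dl_def wedge_lin sum.distrib scaleR_add_right scaleR_sum_right)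
  also have "\<dots> = (-1) ^ l *\<^sub>R (p \<and>\<^sub>w dl c w)" by (simp add: s0 x0)
  finally show ?thesis by (simp add: delta_dl[OF anti12 anti23])
qed




lemma hodge_bf: "hodge (bf M) = shuffle_sign M (- M) *\<^sub>R bf (- (M::'n::{finite,linorder} set))"
proof (rule form_eq_coords)
  fix K :: "'n set"
  show "hodge (bf M) $ K = (shuffle_sign M (- M) *\<^sub>R bf (- M)) $ K"
  proof (cases "K = - M")
    case True thus ?thesis by (simp add: hodge_nth bf_nth)
  next
    case False
    hence "- K \<noteq> M" by auto
    thus ?thesis using False by (simp add: hodge_nth bf_nth)
  qed
qed

lemma hodge_adj_bf:
  fixes A B I :: "'n::{finite,linorder} set"
  assumes cA: "card A = l" and cB: "card B = m"
  shows "bf I \<bullet> hodge (bf A \<and>\<^sub>w bf B) = (-1) ^ (l * m) * ((bf A \<and>\<^sub>w bf I) \<bullet> hodge (bf B))"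
proof (cases "A \<inter> B = {} \<and> I = - (A \<union> B)")
  case True
  hence h: "A \<inter> I = {}" "A \<union> I = - B" "A \<inter> B = {}" "I = - (A \<union> B)" by auto
  have L: "bf I \<bullet> hodge (bf A \<and>\<^sub>w bf B) = shuffle_sign A B * shuffle_sign (A \<union> B) I"
    using h by (simp add: wedge_bf hodge_bf inner_bf_left linear_scale[OF linear_hodge] bf_nth)
  have R: "(bf A \<and>\<^sub>w bf I) \<bullet> hodge (bf B) = shuffle_sign A I * shuffle_sign B (- B)"
    using h by (simp add: wedge_bf hodge_bf inner_bf_left bf_nth)
  have s1: "shuffle_sign (A \<union> B) I = shuffle_sign A I * shuffle_sign B I" using h(3) by (rule ss_Un_left)
  have s2: "shuffle_sign B (- B) = shuffle_sign B A * shuffle_sign B I"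
    unfolding h(2)[symmetric] using h(1) by (rule ss_Un_right)
  have s3: "shuffle_sign A B = (-1) ^ (l * m) * shuffle_sign B A"
    using ss_swap'[OF h(3)] cA cB by simp
  show ?thesis unfolding L R s1 s2 s3 by (simp add: mult_ac)
next
  case False
  have n2: "\<not> (A \<inter> I = {} \<and> A \<union> I = - B)" using False by auto
  have L: "bf I \<bullet> hodge (bf A \<and>\<^sub>w bf B) = 0"
  proof (cases "A \<inter> B = {}")
    case True
    hence "I \<noteq> - (A \<union> B)" using False by auto
    thus ?thesis using True by (simp add: wedge_bf hodge_bf inner_bf_left linear_scale[OF linear_hodge] bf_nth)
  qed (simp add: wedge_bf linear_0[OF linear_hodge])
  have R: "(bf A \<and>\<^sub>w bf I) \<bullet> hodge (bf B) = 0"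
  proof (cases "A \<inter> I = {}")
    case True
    hence "A \<union> I \<noteq> - B" using n2 by auto
    thus ?thesis using True by (simp add: wedge_bf hodge_bf inner_bf_left bf_nth)
  qed (simp add: wedge_bf)
  show ?thesis using L R by simp
qed

lemma hodge_adj:
  fixes p u x :: "'n::{finite,linorder} form"
  assumes phi: "p \<in> Lam (int l)" and u: "u \<in> Lam (int m)"
  shows "x \<bullet> hodge (p \<and>\<^sub>w u) = (-1) ^ (l * m) * ((p \<and>\<^sub>w x) \<bullet> hodge u)"
proof -
  have lh: "hodge (a + b) = hodge a + hodge b" "hodge (r *\<^sub>R a) = r *\<^sub>R hodge a" for a b r
    using linear_add[OF linear_hodge] linear_scale[OF linear_hodge] by auto
  have h1: "x \<bullet> hodge (bf A \<and>\<^sub>w bf B) = (-1) ^ (l * m) * ((bf A \<and>\<^sub>w x) \<bullet> hodge (bf B))"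
    if "card A = l" "card B = m" for A B
    by (rule linear_eq_bf[where f="\<lambda>x. x \<bullet> hodge (bf A \<and>\<^sub>w bf B)" and g="\<lambda>x. (-1) ^ (l * m) * ((bf A \<and>\<^sub>w x) \<bullet> hodge (bf B))"])
      (auto intro!: linearI simp: inner_add_left wedge_lin algebra_simps hodge_adj_bf[OF that])
  have h2: "x \<bullet> hodge (bf A \<and>\<^sub>w u) = (-1) ^ (l * m) * ((bf A \<and>\<^sub>w x) \<bullet> hodge u)"
    if "card A = l" for A
    by (rule linear_eq_bf_supp[where f="\<lambda>u. x \<bullet> hodge (bf A \<and>\<^sub>w u)" and g="\<lambda>u. (-1) ^ (l * m) * ((bf A \<and>\<^sub>w x) \<bullet> hodge u)"])
      (auto intro!: linearI simp: inner_add_right wedge_lin lh algebra_simps h1[OF that] Lam_supp_nat[OF u])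
  show ?thesis
    by (rule linear_eq_bf_supp[where f="\<lambda>p. x \<bullet> hodge (p \<and>\<^sub>w u)" and g="\<lambda>p. (-1) ^ (l * m) * ((p \<and>\<^sub>w x) \<bullet> hodge u)"])
      (auto intro!: linearI simp: inner_add_left inner_add_right wedge_lin lh algebra_simps h2 Lam_supp_nat[OF phi])
qed


lemma subspace_Lam_plus: "subspace (Lam_plus p k)"
  using subspace_Lam[of k] unfolding subspace_def Lam_plus_def by (auto simp: wedge_lin)

lemma subspace_Lam_minus: "subspace (Lam_minus p k)"
  using subspace_Lam[of k] unfolding subspace_def Lam_minus_def by (auto simp: form_inner_eq inner_add_left)

lemma Lam_minus_sub: "Lam_minus p k \<subseteq> Lam k"
  by (auto simp: Lam_minus_def)

lemma Lam_plus_sub: "Lam_plus p k \<subseteq> Lam k"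
  by (auto simp: Lam_plus_def)

lemma linear_T: "linear (\<lambda>u. hodge (p \<and>\<^sub>w u))"
  by (intro linearI) (simp_all add: wedge_lin linear_add[OF linear_hodge] linear_scale[OF linear_hodge])

lemma minus_plus_zero: "x \<in> Lam_minus p k \<Longrightarrow> x \<in> Lam_plus p k \<Longrightarrow> x = 0"
  by (auto simp: Lam_minus_def form_inner_eq)

lemma Lam_minus_eq:
  fixes p :: "'n::{finite,linorder} form"
  assumes phi: "p \<in> Lam (int l)" and km: "k + l + m = CARD('n)"
  shows "Lam_minus p (int k) = (\<lambda>u. hodge (p \<and>\<^sub>w u)) ` Lam (int m)"
proof
  let ?T = "\<lambda>u. hodge (p \<and>\<^sub>w u)"
  have TL: "?T u \<in> Lam (int k)" if "u \<in> Lam (int m)" for u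
  proof -
    have "p \<and>\<^sub>w u \<in> Lam (int l + int m)" by (rule wedge_Lam[OF phi that])
    have "int CARD('n) = int k + int l + int m" by (metis of_nat_add km)
    hence e: "int CARD('n) - (int l + int m) = int k" by linarith
    from hodge_Lam[OF \<open>p \<and>\<^sub>w u \<in> Lam (int l + int m)\<close>] show ?thesis using e by simp
  qed
  show "?T ` Lam (int m) \<subseteq> Lam_minus p (int k)"
  proof
    fix b assume "b \<in> ?T ` Lam (int m)"
    then obtain u where u: "u \<in> Lam (int m)" and b: "b = ?T u" by auto
    have "form_inner b g = 0" if "g \<in> Lam_plus p (int k)" for g
    proof -
      have "p \<and>\<^sub>w g = 0" using that by (simp add: Lam_plus_def)
      thus ?thesis unfolding b form_inner_eq using hodge_adj[OF phi u, of g] by (simp add: inner_commute)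
    qed
    thus "b \<in> Lam_minus p (int k)" using TL[OF u] b by (simp add: Lam_minus_def)
  qed
  show "Lam_minus p (int k) \<subseteq> ?T ` Lam (int m)"
  proof
    fix b assume bm: "b \<in> Lam_minus p (int k)"
    let ?S = "?T ` Lam (int m)"
    have sS: "subspace ?S" by (rule real_vector.linear_subspace_image[OF linear_T subspace_Lam])
    hence spS: "span ?S = ?S" by (simp add: span_eq_iff)
    obtain y z where y: "y \<in> span ?S" and zo: "\<And>w. w \<in> span ?S \<Longrightarrow> orthogonal z w" and bz: "b = y + z"
      using orthogonal_subspace_decomp_exists[of ?S b] by blast
    have yS: "y \<in> ?S" using y spS by simp
    have yL: "y \<in> Lam (int k)" using yS TL by auto
    have bL: "b \<in> Lam (int k)" using bm by (simp add: Lam_minus_def)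
    have zL: "z \<in> Lam (int k)" using subspace_diff[OF subspace_Lam bL yL] bz by (simp add: algebra_simps)
    define w where "w = p \<and>\<^sub>w z"
    have wL: "w \<in> Lam (int (l + k))" using wedge_Lam[OF phi zL] by (simp add: w_def)
    have "int CARD('n) = int k + int l + int m" by (metis of_nat_add km)
    hence "int CARD('n) - int (l + k) = int m" by simp
    hence hwL: "hodge w \<in> Lam (int m)" using hodge_Lam[OF wL] by simp
    have "orthogonal z (?T (hodge w))" using zo[of "?T (hodge w)"] hwL spS by auto
    hence "z \<bullet> ?T (hodge w) = 0" by (simp add: orthogonal_def)
    hence "(-1) ^ (l * m) * (w \<bullet> hodge (hodge w)) = 0" using hodge_adj[OF phi hwL, of z] by (simp add: w_def)
    hence "w \<bullet> w = 0" by (simp add: hodge_hodge[OF wL])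
    hence w0: "p \<and>\<^sub>w z = 0" by (simp add: w_def)
    have zP: "z \<in> Lam_plus p (int k)" using zL w0 by (simp add: Lam_plus_def)
    have "b \<bullet> z = 0" using bm zP by (simp add: Lam_minus_def form_inner_eq)
    moreover have "y \<bullet> z = 0" using zo[OF y] by (simp add: orthogonal_def inner_commute)
    ultimately have "z \<bullet> z = 0" using bz by (simp add: inner_add_left)
    hence "z = 0" by simp
    thus "b \<in> ?S" using bz yS by simp
  qed
qed

lemma image_T_minus:
  fixes p :: "'n::{finite,linorder} form"
  shows "(\<lambda>u. hodge (p \<and>\<^sub>w u)) ` Lam j = (\<lambda>u. hodge (p \<and>\<^sub>w u)) ` Lam_minus p j"
proof
  show "(\<lambda>u. hodge (p \<and>\<^sub>w u)) ` Lam_minus p j \<subseteq> (\<lambda>u. hodge (p \<and>\<^sub>w u)) ` Lam j"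
    using Lam_minus_sub by blast
  show "(\<lambda>u. hodge (p \<and>\<^sub>w u)) ` Lam j \<subseteq> (\<lambda>u. hodge (p \<and>\<^sub>w u)) ` Lam_minus p j"
  proof
    fix b assume "b \<in> (\<lambda>u. hodge (p \<and>\<^sub>w u)) ` Lam j"
    then obtain u where u: "u \<in> Lam j" and b: "b = hodge (p \<and>\<^sub>w u)" by auto
    have spP: "span (Lam_plus p j) = Lam_plus p j" by (simp add: span_eq_iff subspace_Lam_plus)
    obtain y z where y: "y \<in> span (Lam_plus p j)" and zo: "\<And>w. w \<in> span (Lam_plus p j) \<Longrightarrow> orthogonal z w" and uz: "u = y + z"
      using orthogonal_subspace_decomp_exists[of "Lam_plus p j" u] by blast
    have yP: "y \<in> Lam_plus p j" using y spP by simp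
    have yL: "y \<in> Lam j" and py: "p \<and>\<^sub>w y = 0" using yP by (auto simp: Lam_plus_def)
    have zL: "z \<in> Lam j" using subspace_diff[OF subspace_Lam u yL] uz by (simp add: algebra_simps)
    have zM: "z \<in> Lam_minus p j"
      using zL zo spP by (auto simp: Lam_minus_def form_inner_eq orthogonal_def)
    have "b = hodge (p \<and>\<^sub>w z)" using b uz py by (simp add: wedge_lin)
    thus "b \<in> (\<lambda>u. hodge (p \<and>\<^sub>w u)) ` Lam_minus p j" using zM by blast
  qed
qed

lemma inj_T_minus:
  fixes p :: "'n::{finite,linorder} form"
  shows "inj_on (\<lambda>u. hodge (p \<and>\<^sub>w u)) (Lam_minus p j)"
proof (rule inj_onI)
  fix x y assume x: "x \<in> Lam_minus p j" and y: "y \<in> Lam_minus p j" and e: "hodge (p \<and>\<^sub>w x) = hodge (p \<and>\<^sub>w y)"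
  have d: "x - y \<in> Lam_minus p j" by (rule subspace_diff[OF subspace_Lam_minus x y])
  have "hodge (p \<and>\<^sub>w (x - y)) = 0" using e by (simp add: wedge_lin linear_diff[OF linear_hodge])
  hence "p \<and>\<^sub>w (x - y) = 0" by (rule hodge_zero)
  hence "x - y \<in> Lam_plus p j" using d Lam_minus_sub by (auto simp: Lam_plus_def)
  hence "x - y = 0" using minus_plus_zero[OF d] by blast
  thus "x = y" by simp
qed

lemma Lam_minus_0I: "0 \<in> Lam_minus p k"
  by (simp add: Lam_minus_def Lam_0I form_inner_eq)

lemma Lam_minus_big:
  fixes p :: "'n::{finite,linorder} form"
  assumes phi: "p \<in> Lam (int l)" and big: "int l + k > int CARD('n)"
  shows "Lam_minus p k = {0}"
proof -
  have "b = 0" if b: "b \<in> Lam_minus p k" for b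
  proof -
    have bL: "b \<in> Lam k" using b by (simp add: Lam_minus_def)
    have "p \<and>\<^sub>w b \<in> Lam (int l + k)" by (rule wedge_Lam[OF phi bL])
    hence "p \<and>\<^sub>w b = 0" using Lam_big[OF big] by simp
    hence "b \<in> Lam_plus p k" using bL by (simp add: Lam_plus_def)
    thus ?thesis using minus_plus_zero[OF b] by blast
  qed
  thus ?thesis using Lam_minus_0I by blast
qed




definition vvec :: "real^('n::{finite,linorder}) \<Rightarrow> 'n form" where
  "vvec x = (\<Sum>i\<in>UNIV. x $ i *\<^sub>R bf {i})"

lemma linear_vvec: "linear vvec"
  by (intro linearI) (simp_all add: vvec_def scaleR_add_left sum.distrib scaleR_sum_right)

lemma bracket_axis_right: "bracket c y (axis j 1) $ i = (\<Sum>a\<in>UNIV. y $ a * c a j i)"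
proof -
  have "(\<Sum>b\<in>UNIV. y $ a * axis j 1 $ b * c a b i) = y $ a * c a j i" for a
  proof -
    have "(\<Sum>b\<in>UNIV. y $ a * axis j 1 $ b * c a b i) = (\<Sum>b\<in>UNIV. axis j (1::real) $ b * (y $ a * c a b i))"
      by (rule sum.cong) (simp_all add: mult_ac)
    also have "\<dots> = y $ a * c a j i" by (rule sum_axis)
    finally show ?thesis .
  qed
  thus ?thesis by (simp add: bracket_def)
qed

lemma ad_vvec: "ad_action c y (vvec x) = vvec (bracket c y x)"
proof -
  have t: "x $ b *\<^sub>R interior j (bf {b}) = (if b = j then x $ j *\<^sub>R bf {} else 0)" for b j
    by (simp add: interior_single)
  have i1: "interior j (vvec x) = x $ j *\<^sub>R bf {}" for j
    by (simp add: vvec_def linear_sum[OF linear_interior] linear_scale[OF linear_interior] t)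
  have b2: "bracket c y x $ i = (\<Sum>j\<in>UNIV. bracket c y (axis j 1) $ i * x $ j)" for i
  proof -
    have "(\<Sum>j\<in>UNIV. bracket c y (axis j 1) $ i * x $ j) = (\<Sum>j\<in>UNIV. \<Sum>a\<in>UNIV. y $ a * x $ j * c a j i)"
      by (simp add: bracket_axis_right sum_distrib_right sum_distrib_left mult_ac)
    also have "\<dots> = (\<Sum>a\<in>UNIV. \<Sum>j\<in>UNIV. y $ a * x $ j * c a j i)" by (rule sum.swap)
    also have "\<dots> = bracket c y x $ i" by (simp add: bracket_def)
    finally show ?thesis by simp
  qed
  have "ad_action c y (vvec x) = (\<Sum>i\<in>UNIV. \<Sum>j\<in>UNIV. (bracket c y (axis j 1) $ i * x $ j) *\<^sub>R bf {i})"
    by (simp add: ad_action_def i1 wedge_scale_right)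
  also have "\<dots> = vvec (bracket c y x)"
    by (simp add: vvec_def b2 scaleR_sum_left)
  finally show ?thesis .
qed

lemma bracket_anti:
  assumes anti12: "\<And>i j k. c i j k = - c j i k"
  shows "bracket c x y = - bracket c y x"
proof (rule vec_eq_iff[THEN iffD2], rule allI)
  fix k
  have "bracket c x y $ k = (\<Sum>a\<in>UNIV. \<Sum>b\<in>UNIV. x $ a * y $ b * c a b k)" by (simp add: bracket_def)
  also have "\<dots> = (\<Sum>b\<in>UNIV. \<Sum>a\<in>UNIV. x $ a * y $ b * c a b k)" by (rule sum.swap)
  also have "\<dots> = (\<Sum>b\<in>UNIV. \<Sum>a\<in>UNIV. - (y $ b * x $ a * c b a k))"
  proof -
    have "x $ a * y $ b * c a b k = - (y $ b * x $ a * c b a k)" for a b using anti12[of a b k] by simp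
    thus ?thesis by simp
  qed
  also have "\<dots> = (- bracket c y x) $ k" by (simp add: bracket_def sum_negf)
  finally show "bracket c x y $ k = (- bracket c y x) $ k" .
qed

lemma vvec_axis:
  fixes i :: "'n::{finite,linorder}"
  shows "vvec (axis i 1) = bf {i}"
proof -
  have "axis i (1::real) $ b *\<^sub>R bf {b} = (if b = i then bf {i} else 0)" for b :: 'n
    by (simp add: axis_def)
  thus ?thesis by (simp add: vvec_def)
qed

lemma Lam_plus_1:
  fixes c :: "'n::{finite,linorder} \<Rightarrow> 'n \<Rightarrow> 'n \<Rightarrow> real"
  assumes g: "compact_simple_orthonormal c" and phi: "p \<in> Lam (int l)" and pnz: "p \<noteq> 0"
    and inv: "\<And>x. ad_action c x p = 0" and ln: "l < CARD('n)"
  shows "Lam_plus p 1 = {0}"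
proof -
  have lie: "is_lie_algebra c" using g by (simp add: compact_simple_orthonormal_def)
  have anti12: "c i j k = - c j i k" for i j k by (rule c_anti12[OF lie])
  have simple: "\<And>S. lie_ideal c S \<Longrightarrow> S = {0} \<or> S = UNIV" using g by (simp add: compact_simple_orthonormal_def)
  define S where "S = {x. p \<and>\<^sub>w vvec x = 0}"
  have sub: "subspace S"
    unfolding subspace_def S_def
    by (simp add: linear_0[OF linear_vvec] linear_add[OF linear_vvec] linear_scale[OF linear_vvec] wedge_lin)
  have br: "bracket c x y \<in> S" if x: "x \<in> S" for x y
  proof -
    have "ad_action c y (p \<and>\<^sub>w vvec x) = 0" using x by (simp add: S_def linear_0[OF linear_ad])
    hence "p \<and>\<^sub>w vvec (bracket c y x) = 0" by (simp add: ad_deriv inv ad_vvec)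
    hence "p \<and>\<^sub>w vvec (bracket c x y) = 0"
      by (simp add: bracket_anti[OF anti12, where x=x and y=y] linear_neg[OF linear_vvec] wedge_lin)
    thus ?thesis by (simp add: S_def)
  qed
  have "lie_ideal c S" unfolding lie_ideal_def using sub br by blast
  hence S01: "S = {0} \<or> S = UNIV" by (rule simple)
  have "S \<noteq> UNIV"
  proof
    assume SU: "S = UNIV"
    obtain A where pA: "p $ A \<noteq> 0" using pnz by (auto simp: vec_eq_iff)
    have "card A = l" using Lam_supp_nat[OF phi pA] .
    hence "A \<noteq> UNIV" using ln by auto
    then obtain i where iA: "i \<notin> A" by auto
    have "axis i 1 \<in> S" using SU by simp
    hence "p \<and>\<^sub>w bf {i} = 0" by (simp add: S_def vvec_axis)
    hence "(p \<and>\<^sub>w bf {i}) $ (insert i A) = 0" by simp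
    moreover have "insert i A - {i} = A" using iA by auto
    ultimately show False using pA by (simp add: wedge_bf_right)
  qed
  hence S0: "S = {0}" using S01 by blast
  have "b = 0" if b: "b \<in> Lam_plus p 1" for b
  proof -
    define x where "x = (\<chi> i. b $ {i})"
    have bL: "b \<in> Lam 1" and pb: "p \<and>\<^sub>w b = 0" using b by (auto simp: Lam_plus_def)
    have vb: "vvec x = b"
    proof (rule form_eq_coords)
      fix K :: "'n set"
      have t: "x $ i *\<^sub>R bf {i} $ K = (if K = {i} then b $ K else 0)" for i
        by (simp add: x_def bf_nth)
      show "vvec x $ K = b $ K"
      proof (cases "\<exists>j. K = {j}")
        case True
        then obtain j where j: "K = {j}" by blast
        have "vvec x $ K = (\<Sum>i\<in>UNIV. if K = {i} then b $ K else 0)"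
          unfolding vvec_def sum_component vector_scaleR_component by (simp only: t)
        also have "\<dots> = b $ K" using j by simp
        finally show ?thesis .
      next
        case False
        hence "card K \<noteq> 1" by (metis card_1_singleton_iff One_nat_def)
        hence "b $ K = 0" using bL Lam_supp by force
        have "vvec x $ K = (\<Sum>i\<in>UNIV. if K = {i} then b $ K else 0)"
          unfolding vvec_def sum_component vector_scaleR_component by (simp only: t)
        thus ?thesis using False \<open>b $ K = 0\<close> by simp
      qed
    qed
    have "x \<in> S" using pb vb by (simp add: S_def)
    hence "x = 0" using S0 by simp
    thus ?thesis using vb linear_0[OF linear_vvec] by metis
  qed
  moreover have "0 \<in> Lam_plus p 1" by (simp add: Lam_plus_def Lam_0I)
  ultimately show ?thesis by blast
qed

lemma T_nonzero:
  fixes p :: "'n::{finite,linorder} form"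
  assumes phi: "p \<in> Lam (int l)" and pnz: "p \<noteq> 0" and ml: "m + l \<le> CARD('n)"
  shows "\<exists>u\<in>Lam (int m). hodge (p \<and>\<^sub>w u) \<noteq> 0"
proof -
  obtain A where pA: "p $ A \<noteq> 0" using pnz by (auto simp: vec_eq_iff)
  have cA: "card A = l" using Lam_supp_nat[OF phi pA] .
  have "card (- A) = CARD('n) - l" using cA by (simp add: card_compl)
  hence "m \<le> card (- A)" using ml by simp
  then obtain B where B: "B \<subseteq> - A" "card B = m" by (meson obtain_subset_with_card_n)
  have e: "(A \<union> B) - B = A" using B by auto
  have "(p \<and>\<^sub>w bf B) $ (A \<union> B) \<noteq> 0" using pA by (simp add: wedge_bf_right e)
  hence "p \<and>\<^sub>w bf B \<noteq> 0" by auto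
  hence "hodge (p \<and>\<^sub>w bf B) \<noteq> 0" using hodge_zero by blast
  moreover have "bf B \<in> Lam (int m)" using bf_Lam[of B] B by simp
  ultimately show ?thesis by blast
qed

lemma dim_bij:
  fixes A B :: "'n::{finite,linorder} form set"
  assumes b: "bij_betw f A B" and s: "subspace A" and lf: "linear f"
  shows "dim B = dim A"
proof -
  have "inj_on f (span A)" using b s by (metis bij_betw_def span_eq_iff)
  hence "dim (f ` A) = dim A" by (rule dim_image_eq[OF lf])
  thus ?thesis using b by (simp add: bij_betw_def)
qed





theorem proposition5p4:
  fixes c :: "'n::{finite,linorder} \<Rightarrow> 'n \<Rightarrow> 'n \<Rightarrow> real"
    and \<phi> :: "'n form" and l :: nat
  defines "n \<equiv> CARD('n)"
  assumes g: "compact_simple_orthonormal c"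
    and phi_deg: "\<phi> \<in> Lam (int l)"
    and phi_nz: "\<phi> \<noteq> 0"
    and phi_inv: "ad_invariant c \<phi>"
    and l_ge: "3 \<le> l" and l_le: "l + 3 \<le> n"
  shows
    \<comment> \<open>(a)\<close>
    "(\<forall>k::int. 0 \<le> k \<and> k \<le> int n \<longrightarrow>
        Lam_minus \<phi> k = hodge ` L_op \<phi> ` Lam (int n - int l - k) \<and>
        Lam_minus \<phi> k = hodge ` L_op \<phi> ` Lam_minus \<phi> (int n - int l - k))
   \<comment> \<open>(b)\<close>
   \<and> (\<forall>k::int. 0 \<le> k \<and> k \<le> int n \<longrightarrow> (Lam_minus \<phi> k \<noteq> {0} \<longleftrightarrow> k \<le> int n - int l))
   \<comment> \<open>(c)\<close>
   \<and> (\<forall>k::int. 0 \<le> k \<and> k \<le> int n - int l \<longrightarrow>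
        bij_betw (hodge \<circ> L_op \<phi>) (Lam_minus \<phi> (int n - int l - k)) (Lam_minus \<phi> k))
   \<comment> \<open>in particular\<close>
   \<and> dim (Lam_minus \<phi> 0) = 1 \<and> dim (Lam_minus \<phi> (int n - int l)) = 1
   \<and> dim (Lam_minus \<phi> 1) = dim (Lam 1 :: 'n form set)
   \<and> dim (Lam_minus \<phi> (int n - int l - 1)) = dim (Lam 1 :: 'n form set)
   \<and> (\<forall>k::int. int n - int l + 1 \<le> k \<and> k \<le> int n \<longrightarrow> Lam_minus \<phi> k = {0})
   \<comment> \<open>(d)\<close>
   \<and> (\<forall>\<omega>. (-1) ^ (l + 1) *\<^sub>R L_op \<phi> (d_g c \<omega>) + d_g c (L_op \<phi> \<omega>) = 0)
   \<and> (\<forall>\<omega>. (-1) ^ (l + 1) *\<^sub>R L_op \<phi> (delta_g c \<omega>) + delta_g c (L_op \<phi> \<omega>) = 0)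
   \<and> (\<forall>\<omega>. harmonic c \<omega> \<longrightarrow> harmonic c (L_op \<phi> \<omega>))
   \<and> (\<forall>\<omega>. \<omega> \<in> range (d_g c) \<longrightarrow> L_op \<phi> \<omega> \<in> range (d_g c))
   \<and> (\<forall>\<omega>. \<omega> \<in> range (delta_g c) \<longrightarrow> L_op \<phi> \<omega> \<in> range (delta_g c))"
proof -
  have nn: "n = CARD('n)" by (simp add: n_def)
  have lie: "is_lie_algebra c" using g by (simp add: compact_simple_orthonormal_def)
  have kill: "\<And>i j. killing c i j = - (if i = j then 1 else 0)"
    using g unfolding compact_simple_orthonormal_def by blast
  have anti12: "\<And>i j k. c i j k = - c j i k" by (rule c_anti12[OF lie])
  have anti23: "\<And>i j k. c i j k = - c i k j" by (rule c_anti23[OF lie kill])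
  have inv: "\<And>x. ad_action c x \<phi> = 0" using phi_inv by (simp add: ad_invariant_def)
  define T where "T = (\<lambda>u. hodge (\<phi> \<and>\<^sub>w u))"
  have img: "hodge ` L_op \<phi> ` X = T ` X" for X by (simp add: T_def L_op_def image_image)
  have comp: "hodge \<circ> L_op \<phi> = T" by (simp add: T_def L_op_def fun_eq_iff)
  have ln: "l < CARD('n)" using l_le nn by simp
  have linT: "linear T" unfolding T_def by (rule linear_T)
  have mainA: "Lam_minus \<phi> k = T ` Lam (int n - int l - k)" if k0: "0 \<le> k" for k :: int
  proof (cases "k \<le> int n - int l")
    case True
    define k' m where "k' = nat k" and "m = nat (int n - int l - k)"
    have e1: "int k' = k" "int m = int n - int l - k" using True k0 by (simp_all add: k'_def m_def)
    have "int (k' + l + m) = int CARD('n)" using e1 nn by simp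
    hence km: "k' + l + m = CARD('n)" by simp
    show ?thesis using Lam_minus_eq[OF phi_deg km] e1 by (simp add: T_def)
  next
    case False
    have "Lam_minus \<phi> k = {0}" using False nn by (intro Lam_minus_big[OF phi_deg]) linarith
    moreover have "Lam (int n - int l - k) = ({0} :: 'n form set)" using False by (intro Lam_neg) simp
    ultimately show ?thesis by (simp add: T_def linear_0[OF linear_hodge])
  qed
  have mainA2: "T ` Lam j = T ` Lam_minus \<phi> j" for j unfolding T_def by (rule image_T_minus)
  have pa: "\<forall>k::int. 0 \<le> k \<and> k \<le> int n \<longrightarrow>
        Lam_minus \<phi> k = hodge ` L_op \<phi> ` Lam (int n - int l - k) \<and>
        Lam_minus \<phi> k = hodge ` L_op \<phi> ` Lam_minus \<phi> (int n - int l - k)"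
    using mainA mainA2 by (simp add: img)
  have big: "Lam_minus \<phi> k = {0}" if "k > int n - int l" for k :: int
    using that nn by (intro Lam_minus_big[OF phi_deg]) linarith
  have pb: "\<forall>k::int. 0 \<le> k \<and> k \<le> int n \<longrightarrow> (Lam_minus \<phi> k \<noteq> {0} \<longleftrightarrow> k \<le> int n - int l)"
  proof (intro allI impI)
    fix k :: int assume k: "0 \<le> k \<and> k \<le> int n"
    show "(Lam_minus \<phi> k \<noteq> {0}) = (k \<le> int n - int l)"
    proof
      assume ne: "Lam_minus \<phi> k \<noteq> {0}"
      show "k \<le> int n - int l"
      proof (rule ccontr)
        assume "\<not> k \<le> int n - int l"
        hence "Lam_minus \<phi> k = {0}" by (intro big) simp
        thus False using ne by simp
      qed
    next
      assume kl: "k \<le> int n - int l"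
      define m where "m = nat (int n - int l - k)"
      have em: "int m = int n - int l - k" using kl by (simp add: m_def)
      have "int (m + l) \<le> int CARD('n)" using em k nn by simp
      hence "m + l \<le> CARD('n)" by simp
      then obtain u where u: "u \<in> Lam (int m)" "T u \<noteq> 0" using T_nonzero[OF phi_deg phi_nz] by (auto simp: T_def)
      have "T u \<in> Lam_minus \<phi> k" using mainA[of k] k u(1) em by auto
      thus "Lam_minus \<phi> k \<noteq> {0}" using u(2) by auto
    qed
  qed
  have bij: "bij_betw T (Lam_minus \<phi> (int n - int l - k)) (Lam_minus \<phi> k)" if k: "0 \<le> k" for k :: int
  proof -
    have "T ` Lam_minus \<phi> (int n - int l - k) = Lam_minus \<phi> k" using mainA[OF k] mainA2 by simp
    moreover have "inj_on T (Lam_minus \<phi> (int n - int l - k))" unfolding T_def by (rule inj_T_minus)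
    ultimately show ?thesis by (simp add: bij_betw_def)
  qed
  have pc: "\<forall>k::int. 0 \<le> k \<and> k \<le> int n - int l \<longrightarrow>
        bij_betw (hodge \<circ> L_op \<phi>) (Lam_minus \<phi> (int n - int l - k)) (Lam_minus \<phi> k)"
    using bij by (simp add: comp)
  have d0: "dim (Lam_minus \<phi> 0) = 1"
  proof -
    have "Lam_minus \<phi> 0 \<subseteq> span {bf {}}"
    proof
      fix x assume "x \<in> Lam_minus \<phi> 0"
      hence xL: "x \<in> Lam 0" by (simp add: Lam_minus_def)
      have "x = x $ {} *\<^sub>R bf {}"
      proof (rule form_eq_coords)
        fix K :: "'n set"
        show "x $ K = (x $ {} *\<^sub>R bf {}) $ K"
        proof (cases "K = {}")
          case True then show ?thesis by (simp add: bf_nth)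
        next
          case False
          hence "int (card K) \<noteq> 0" by simp
          hence "x $ K = 0" using xL Lam_supp by blast
          thus ?thesis using False by (simp add: bf_nth)
        qed
      qed
      thus "x \<in> span {bf {}}" by (metis span_base span_scale singletonI)
    qed
    hence "dim (Lam_minus \<phi> 0) \<le> card {bf {} :: 'n form}" by (rule dim_le_card) simp
    moreover have "dim (Lam_minus \<phi> 0) \<noteq> 0"
    proof
      assume "dim (Lam_minus \<phi> 0) = 0"
      hence "Lam_minus \<phi> 0 \<subseteq> {0}" by simp
      moreover have "Lam_minus \<phi> 0 \<noteq> {0}" using pb nn l_le by auto
      ultimately show False using Lam_minus_0I by blast
    qed
    ultimately show ?thesis by (simp del: dim_eq_0)
  qed
  have dnl: "dim (Lam_minus \<phi> (int n - int l)) = 1"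
  proof -
    have "bij_betw T (Lam_minus \<phi> 0) (Lam_minus \<phi> (int n - int l))"
      using bij[of "int n - int l"] l_le by simp
    thus ?thesis using dim_bij[OF _ subspace_Lam_minus linT] d0 by simp
  qed
  have L1: "Lam_minus \<phi> 1 = Lam 1"
    using Lam_plus_1[OF g phi_deg phi_nz inv ln] by (auto simp: Lam_minus_def form_inner_eq)
  have d1: "dim (Lam_minus \<phi> 1) = dim (Lam 1 :: 'n form set)" by (simp add: L1)
  have d2: "dim (Lam_minus \<phi> (int n - int l - 1)) = dim (Lam 1 :: 'n form set)"
  proof -
    have "bij_betw T (Lam_minus \<phi> 1) (Lam_minus \<phi> (int n - int l - 1))"
      using bij[of "int n - int l - 1"] l_le by simp
    thus ?thesis using dim_bij[OF _ subspace_Lam_minus linT] d1 by simp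
  qed
  have pz: "\<forall>k::int. int n - int l + 1 \<le> k \<and> k \<le> int n \<longrightarrow> Lam_minus \<phi> k = {0}"
    using big by simp
  have l1: "1 \<le> l" using l_ge by simp
  have dd: "\<forall>\<omega>. (-1) ^ (l + 1) *\<^sub>R L_op \<phi> (d_g c \<omega>) + d_g c (L_op \<phi> \<omega>) = 0"
    by (simp add: L_op_def d_ident[OF anti12 anti23 inv phi_deg])
  have de: "\<forall>\<omega>. (-1) ^ (l + 1) *\<^sub>R L_op \<phi> (delta_g c \<omega>) + delta_g c (L_op \<phi> \<omega>) = 0"
    by (simp add: L_op_def delta_ident[OF anti12 anti23 inv phi_deg l1])
  have harm: "\<forall>\<omega>. harmonic c \<omega> \<longrightarrow> harmonic c (L_op \<phi> \<omega>)"
    by (simp add: harmonic_def L_op_def d_ident[OF anti12 anti23 inv phi_deg] delta_ident[OF anti12 anti23 inv phi_deg l1])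
  have sq: "(-1::real) ^ l * (-1) ^ l = 1" by simp
  have rd: "\<forall>\<omega>. \<omega> \<in> range (d_g c) \<longrightarrow> L_op \<phi> \<omega> \<in> range (d_g c)"
  proof (intro allI impI)
    fix \<omega> assume "\<omega> \<in> range (d_g c)"
    then obtain \<eta> where e: "\<omega> = d_g c \<eta>" by auto
    have "d_g c ((-1) ^ l *\<^sub>R (\<phi> \<and>\<^sub>w \<eta>)) = (-1) ^ l *\<^sub>R d_g c (\<phi> \<and>\<^sub>w \<eta>)"
      by (simp add: d_g_dop[OF anti12 anti23] linear_scale[OF linear_dop])
    also have "\<dots> = L_op \<phi> \<omega>" by (simp add: d_ident[OF anti12 anti23 inv phi_deg] e L_op_def sq)
    finally show "L_op \<phi> \<omega> \<in> range (d_g c)" by (metis rangeI)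
  qed
  have rde: "\<forall>\<omega>. \<omega> \<in> range (delta_g c) \<longrightarrow> L_op \<phi> \<omega> \<in> range (delta_g c)"
  proof (intro allI impI)
    fix \<omega> assume "\<omega> \<in> range (delta_g c)"
    then obtain \<eta> where e: "\<omega> = delta_g c \<eta>" by auto
    have "delta_g c ((-1) ^ l *\<^sub>R (\<phi> \<and>\<^sub>w \<eta>)) = (-1) ^ l *\<^sub>R delta_g c (\<phi> \<and>\<^sub>w \<eta>)"
      by (simp add: delta_dl[OF anti12 anti23] linear_scale[OF linear_dl])
    also have "\<dots> = L_op \<phi> \<omega>" by (simp add: delta_ident[OF anti12 anti23 inv phi_deg l1] e L_op_def sq)
    finally show "L_op \<phi> \<omega> \<in> range (delta_g c)" by (metis rangeI)
  qed
  show ?thesis using pa pb pc d0 dnl d1 d2 pz dd de harm rd rde by blast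
qed


end
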